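(* Let $\mathcal{B},\mathcal{B}'$ be differential bigraded algebras over $\mathcal{I}$, let $\widehat{A},\widehat{A}'$ be differential bigraded right $\mathcal{B}$-modules, each free over $\mathbb{Z}$ with a basis of bigrading-homogeneous elements having unique right idempotents, and let $\widehat{DD}$ be a rank-one Type DD bimodule over $\mathcal{B}$ and $\mathcal{B}'$ with $\delta_{DD}(1)=\sum_sa_s\otimes c_s^{op}$. Let $F:\widehat{A}\to\widehat{A}'$ be an $\mathcal{A}_\infty$-morphism with $F_n=0$ for $n>2$. Define $F\boxtimes\mathrm{id}_{DD}:\widehat{A}\to\mathcal{B}'\otimes_{\mathcal{I}}\widehat{A}'$ by \[ (F\boxtimes\mathrm{id}_{DD})(x)=1\otimes F_1(x)+\sum_s(-1)^{\deg_h(c_s)\,(1+\deg_h F_2(x\otimes a_s))}\,c_s\otimes F_2(x\otimes a_s). \] Then $F\boxtimes\mathrm{id}_{DD}$ is a morphism of Type D structures from $\widehat{A}\boxtimes\widehat{DD}$ to $\widehat{A}'\boxtimes\widehat{DD}$.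
   Context: $\mathcal{I}=\mathbb{Z}e_1\times\cdots\times\mathbb{Z}e_k$. Differential bigraded algebras over $\mathcal{I}$: unital associative, bigraded (intrinsic, homological $=\deg_h$), degree-$(0,0)$ part $\mathcal{I}$, differential $\mu_1$ of bidegree $(0,1)$, $\mu_1^2=0$, $\mu_1(xy)=(-1)^{\deg_hy}\mu_1(x)y+x\mu_1(y)$; multiplication $\mu_2$. Right dg module: differential $m_1$ of bidegree $(0,1)$, $m_1^2=0$, $m_1(xb)=(-1)^{\deg_hb}m_1(x)b+x\mu_1(b)$; action $m_2$ (primes for $\widehat{A}'$). $|\mathrm{id}|$ multiplies by $(-1)^{\deg_h}$. Rank-one Type DD bimodule: $\widehat{DD}=\mathcal{I}$ with $\mathcal{I}$-bilinear $\delta_{DD}:\mathcal{I}\to\mathcal{B}\otimes_{\mathcal{I}}(\mathcal{B}')^{op}$ of bidegree $(0,1)$ satisfying, for $\delta_{DD}(1)=\sum_sa_s\otimes c_s^{op}$: $\sum_s(-1)^{\deg_hc_s}\mu_1(a_s)\otimes c_s^{op}+\sum_sa_s\otimes\mu_1(c_s)^{op}+\sum_{s,t}(-1)^{\deg_h(a_t)\deg_h(c_s)}a_sa_t\otimes c_t^{op}c_s^{op}=0$. The Type D structure $\widehat{A}\boxtimes\widehat{DD}$ over $\mathcal{B}'$ is $\widehat{A}$ (as left $\mathcal{I}$-module via its right action) with $\delta(x)=1\otimes m_1(x)+\sum_s(-1)^{\deg_h(xa_s)\deg_h(c_s)}c_s\otimes xa_s$; similarly for $\widehat{A}'$ with $\delta'$.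 An $\mathcal{A}_\infty$-morphism $F$ with $F_n=0$ for $n>2$ consists of a bigrading-preserving $\mathcal{I}$-linear $F_1:\widehat{A}\to\widehat{A}'$ and an $\mathcal{I}$-linear $F_2:\widehat{A}\otimes_{\mathcal{I}}\mathcal{B}\to\widehat{A}'$ preserving intrinsic degree and lowering homological degree by $1$, with $m_1'F_1=F_1m_1$; $m_1'F_2+m_2'(F_1\otimes\mathrm{id})=F_1m_2-F_2(m_1\otimes|\mathrm{id}|)-F_2(\mathrm{id}\otimes\mu_1)$; $-m_2'(F_2\otimes|\mathrm{id}|)=F_2(m_2\otimes\mathrm{id})-F_2(\mathrm{id}\otimes\mu_2)$. A morphism of Type D structures $(D,\delta)\to(D',\delta')$ over $\mathcal{B}'$ is a bigrading-preserving $\mathcal{I}$-linear $\Phi:D\to\mathcal{B}'\otimes_{\mathcal{I}}D'$ with $(\mu_1\otimes|\mathrm{id}|)\Phi=(\mu_2\otimes\mathrm{id})(\mathrm{id}\otimes\Phi)\delta-(\mu_2\otimes\mathrm{id})(\mathrm{id}\otimes\delta')\Phi$. *)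

theory Defs
  imports Main
begin

definition zsc :: "int \<Rightarrow> 'a::ab_group_add \<Rightarrow> 'a" where
  "zsc n x = (if 0 \<le> n then (\<Sum>_\<in>{..<nat n}. x) else - (\<Sum>_\<in>{..<nat (- n)}. x))"

definition sg :: "int \<Rightarrow> 'a::ab_group_add \<Rightarrow> 'a" where
  "sg n x = (if even n then x else - x)"

(* X x q h : x is homogeneous of bidegree (q,h) = (intrinsic, homological).
   A bigrading is a direct sum decomposition into the subgroups X_(q,h). *)
definition bigraded_group :: "('a::ab_group_add \<Rightarrow> int \<Rightarrow> int \<Rightarrow> bool) \<Rightarrow> bool" where
  "bigraded_group X \<longleftrightarrow>
     (\<forall>q h. X 0 q h) \<and>
     (\<forall>x y q h. X x q h \<longrightarrow> X y q h \<longrightarrow> X (x + y) q h) \<and>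
     (\<forall>x q h. X x q h \<longrightarrow> X (- x) q h) \<and>
     (\<forall>x. \<exists>D f. finite D \<and> (\<forall>d\<in>D. X (f d) (fst d) (snd d)) \<and> x = sum f D) \<and>
     (\<forall>D f. finite D \<longrightarrow> (\<forall>d\<in>D. X (f d) (fst d) (snd d)) \<longrightarrow> sum f D = 0
        \<longrightarrow> (\<forall>d\<in>D. f d = 0))"

(* homological degree of a (nonzero) homogeneous element *)
definition hd :: "('a \<Rightarrow> int \<Rightarrow> int \<Rightarrow> bool) \<Rightarrow> 'a \<Rightarrow> int" where
  "hd X x = (THE h. \<exists>q. X x q h)"

record 'b dgba =
  bmul :: "'b \<Rightarrow> 'b \<Rightarrow> 'b"
  bone :: 'b
  bdif :: "'b \<Rightarrow> 'b"
  bidm :: "nat \<Rightarrow> 'b"            (* e_i, indices i < k *)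
  bdeg :: "'b \<Rightarrow> int \<Rightarrow> int \<Rightarrow> bool"

record ('a, 'b) dgmod =
  mact :: "'a \<Rightarrow> 'b \<Rightarrow> 'a"
  mdif :: "'a \<Rightarrow> 'a"
  mdeg :: "'a \<Rightarrow> int \<Rightarrow> int \<Rightarrow> bool"

(* differential bigraded algebra over I = Z e_0 x ... x Z e_(k-1) *)
definition dg_algebra :: "nat \<Rightarrow> ('b::ab_group_add) dgba \<Rightarrow> bool" where
  "dg_algebra k B \<longleftrightarrow>
     bigraded_group (bdeg B) \<and>
     (\<forall>x y z. bmul B (x + y) z = bmul B x z + bmul B y z) \<and>
     (\<forall>x y z. bmul B x (y + z) = bmul B x y + bmul B x z) \<and>
     (\<forall>x y z. bmul B (bmul B x y) z = bmul B x (bmul B y z)) \<and>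
     (\<forall>x. bmul B (bone B) x = x \<and> bmul B x (bone B) = x) \<and>
     (\<forall>x y q h q' h'. bdeg B x q h \<longrightarrow> bdeg B y q' h' \<longrightarrow> bdeg B (bmul B x y) (q + q') (h + h')) \<and>
     (\<forall>i<k. bdeg B (bidm B i) 0 0) \<and>
     (\<forall>i<k. \<forall>j<k. bmul B (bidm B i) (bidm B j) = (if i = j then bidm B i else 0)) \<and>
     bone B = (\<Sum>i<k. bidm B i) \<and>
     (\<forall>x. bdeg B x 0 0 \<longleftrightarrow> (\<exists>n. x = (\<Sum>i<k. zsc (n i) (bidm B i)))) \<and>
     (\<forall>n. (\<Sum>i<k. zsc (n i) (bidm B i)) = 0 \<longrightarrow> (\<forall>i<k. n i = 0)) \<and>
     (\<forall>x y. bdif B (x + y) = bdif B x + bdif B y) \<and>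
     (\<forall>x q h. bdeg B x q h \<longrightarrow> bdeg B (bdif B x) q (h + 1)) \<and>
     (\<forall>x. bdif B (bdif B x) = 0) \<and>
     (\<forall>x y q h. bdeg B y q h \<longrightarrow>
        bdif B (bmul B x y) = sg h (bmul B (bdif B x) y) + bmul B x (bdif B y))"

definition dg_module :: "nat \<Rightarrow> ('b::ab_group_add) dgba \<Rightarrow> ('a::ab_group_add, 'b) dgmod \<Rightarrow> bool" where
  "dg_module k B M \<longleftrightarrow>
     bigraded_group (mdeg M) \<and>
     (\<forall>x y b. mact M (x + y) b = mact M x b + mact M y b) \<and>
     (\<forall>x b c. mact M x (b + c) = mact M x b + mact M x c) \<and>
     (\<forall>x b c. mact M x (bmul B b c) = mact M (mact M x b) c) \<and>
     (\<forall>x. mact M x (bone B) = x) \<and>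
     (\<forall>x b q h q' h'. mdeg M x q h \<longrightarrow> bdeg B b q' h' \<longrightarrow> mdeg M (mact M x b) (q + q') (h + h')) \<and>
     (\<forall>x y. mdif M (x + y) = mdif M x + mdif M y) \<and>
     (\<forall>x q h. mdeg M x q h \<longrightarrow> mdeg M (mdif M x) q (h + 1)) \<and>
     (\<forall>x. mdif M (mdif M x) = 0) \<and>
     (\<forall>x b q h. bdeg B b q h \<longrightarrow>
        mdif M (mact M x b) = sg h (mact M (mdif M x) b) + mact M x (bdif B b))"

definition free_homog_basis :: "nat \<Rightarrow> ('b::ab_group_add) dgba \<Rightarrow> ('a::ab_group_add, 'b) dgmod \<Rightarrow> bool" where
  "free_homog_basis k B M \<longleftrightarrow>
     (\<exists>S. (\<forall>s\<in>S. \<exists>q h. mdeg M s q h) \<and>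
          (\<forall>s\<in>S. \<exists>!i. i < k \<and> mact M s (bidm B i) = s) \<and>
          (\<forall>x. \<exists>!c. finite {s. c s \<noteq> 0} \<and> {s. c s \<noteq> 0} \<subseteq> S \<and>
                  x = (\<Sum>s\<in>{s. c s \<noteq> 0}. zsc (c s) s)))"

(* Tensor products over I, presented by generators and relations:
   a formal list of pairs [(m1,n1),...] stands for  m1 (x) n1 + ... ;
   ra = right I-action on the left factor, la = left I-action on the right factor. *)
definition ind :: "'x \<Rightarrow> 'x \<Rightarrow> int" where
  "ind p = (\<lambda>q. if q = p then 1 else 0)"

inductive_set trel :: "nat \<Rightarrow> ('m::ab_group_add \<Rightarrow> nat \<Rightarrow> 'm) \<Rightarrow> (nat \<Rightarrow> 'n::ab_group_add \<Rightarrow> 'n)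
                        \<Rightarrow> ('m \<times> 'n \<Rightarrow> int) set"
  for k ra la where
  zero: "(\<lambda>_. 0) \<in> trel k ra la"
| addl: "(\<lambda>p. ind (m + m', n) p - ind (m, n) p - ind (m', n) p) \<in> trel k ra la"
| addr: "(\<lambda>p. ind (m, n + n') p - ind (m, n) p - ind (m, n') p) \<in> trel k ra la"
| bal: "i < k \<Longrightarrow> (\<lambda>p. ind (ra m i, n) p - ind (m, la i n) p) \<in> trel k ra la"
| plus: "f \<in> trel k ra la \<Longrightarrow> g \<in> trel k ra la \<Longrightarrow> (\<lambda>p. f p + g p) \<in> trel k ra la"
| neg: "f \<in> trel k ra la \<Longrightarrow> (\<lambda>p. - f p) \<in> trel k ra la"

definition fsum :: "('x \<times> 'y) list \<Rightarrow> ('x \<times> 'y \<Rightarrow> int)" where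
  "fsum xs = (\<lambda>p. int (count_list xs p))"

definition teq :: "nat \<Rightarrow> ('m::ab_group_add \<Rightarrow> nat \<Rightarrow> 'm) \<Rightarrow> (nat \<Rightarrow> 'n::ab_group_add \<Rightarrow> 'n)
                    \<Rightarrow> ('m \<times> 'n) list \<Rightarrow> ('m \<times> 'n) list \<Rightarrow> bool" where
  "teq k ra la xs ys \<longleftrightarrow> (\<lambda>p. fsum xs p - fsum ys p) \<in> trel k ra la"

definition tneg :: "('m::ab_group_add \<times> 'n) list \<Rightarrow> ('m \<times> 'n) list" where
  "tneg xs = map (\<lambda>(m, n). (- m, n)) xs"

(* Rank-one Type DD bimodule: delta_DD(1) = sum_s a_s (x) c_s^op, given as the list ds of (a_s, c_s),
   equality taken in B (x)_I (B')^op, where a e (x) c^op = a (x) (c e)^op. *)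
definition rank_one_DD :: "nat \<Rightarrow> ('b::ab_group_add) dgba \<Rightarrow> ('c::ab_group_add) dgba \<Rightarrow> ('b \<times> 'c) list \<Rightarrow> bool" where
  "rank_one_DD k B B' ds \<longleftrightarrow>
     (let ra = (\<lambda>a i. bmul B a (bidm B i)); la = (\<lambda>i c. bmul B' c (bidm B' i)) in
     (\<forall>(a, c)\<in>set ds. \<exists>qa ha qc hc. bdeg B a qa ha \<and> bdeg B' c qc hc \<and> qa + qc = 0 \<and> ha + hc = 1) \<and>
     (\<forall>i<k. teq k ra la (map (\<lambda>(a, c). (bmul B (bidm B i) a, c)) ds)
                         (map (\<lambda>(a, c). (a, bmul B' (bidm B' i) c)) ds)) \<and>
     teq k ra la
       (map (\<lambda>(a, c). (sg (hd (bdeg B') c) (bdif B a), c)) ds @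
        map (\<lambda>(a, c). (a, bdif B' c)) ds @
        concat (map (\<lambda>(a, c). map (\<lambda>(a', c').
            (sg (hd (bdeg B) a' * hd (bdeg B') c) (bmul B a a'), bmul B' c c')) ds) ds))
       [])"

(* A-infinity morphism F : M -> M' with F_n = 0 for n > 2; F2 is the I-balanced biadditive map
   representing the map on M (x)_I B *)
definition ainf_morphism :: "nat \<Rightarrow> ('b::ab_group_add) dgba \<Rightarrow> ('a::ab_group_add, 'b) dgmod
      \<Rightarrow> ('d::ab_group_add, 'b) dgmod \<Rightarrow> ('a \<Rightarrow> 'd) \<Rightarrow> ('a \<Rightarrow> 'b \<Rightarrow> 'd) \<Rightarrow> bool" where
  "ainf_morphism k B M M' F1 F2 \<longleftrightarrow>
     (\<forall>x y. F1 (x + y) = F1 x + F1 y) \<and>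
     (\<forall>x q h. mdeg M x q h \<longrightarrow> mdeg M' (F1 x) q h) \<and>
     (\<forall>x. \<forall>i<k. F1 (mact M x (bidm B i)) = mact M' (F1 x) (bidm B i)) \<and>
     (\<forall>x y b. F2 (x + y) b = F2 x b + F2 y b) \<and>
     (\<forall>x b c. F2 x (b + c) = F2 x b + F2 x c) \<and>
     (\<forall>x b. \<forall>i<k. F2 (mact M x (bidm B i)) b = F2 x (bmul B (bidm B i) b)) \<and>
     (\<forall>x b. \<forall>i<k. F2 x (bmul B b (bidm B i)) = mact M' (F2 x b) (bidm B i)) \<and>
     (\<forall>x b q h q' h'. mdeg M x q h \<longrightarrow> bdeg B b q' h' \<longrightarrow> mdeg M' (F2 x b) (q + q') (h + h' - 1)) \<and>
     (\<forall>x. mdif M' (F1 x) = F1 (mdif M x)) \<and>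
     (\<forall>x b q h. bdeg B b q h \<longrightarrow>
        mdif M' (F2 x b) + mact M' (F1 x) b
          = F1 (mact M x b) - F2 (mdif M x) (sg h b) - F2 x (bdif B b)) \<and>
     (\<forall>x b b' q h. bdeg B b' q h \<longrightarrow>
        - mact M' (F2 x b) (sg h b') = F2 (mact M x b) b' - F2 x (bmul B b b'))"

definition boxD :: "('c::ab_group_add) dgba \<Rightarrow> ('a::ab_group_add, 'b) dgmod \<Rightarrow> ('b \<times> 'c) list
                    \<Rightarrow> 'a \<Rightarrow> ('c \<times> 'a) list" where
  "boxD B' M ds x =
     (bone B', mdif M x) #
     map (\<lambda>(a, c). (sg (hd (mdeg M) (mact M x a) * hd (bdeg B') c) c, mact M x a)) ds"

definition Fbox :: "('c::ab_group_add) dgba \<Rightarrow> ('d::ab_group_add, 'b) dgmod \<Rightarrow> ('b \<times> 'c) list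
                    \<Rightarrow> ('a \<Rightarrow> 'd) \<Rightarrow> ('a \<Rightarrow> 'b \<Rightarrow> 'd) \<Rightarrow> 'a \<Rightarrow> ('c \<times> 'd) list" where
  "Fbox B' M' ds F1 F2 x =
     (bone B', F1 x) #
     map (\<lambda>(a, c). (sg (hd (bdeg B') c * (1 + hd (mdeg M') (F2 x a))) c, F2 x a)) ds"

(* Morphism of Type D structures (D = M, delta) -> (D' = M', delta') over B', where M, M' are
   left I-modules via their right I-actions; Phi is given on homogeneous elements with values in
   B' (x)_I M' (formal lists). *)
definition typeD_morphism :: "nat \<Rightarrow> ('b::ab_group_add) dgba \<Rightarrow> ('c::ab_group_add) dgba
      \<Rightarrow> ('a::ab_group_add, 'b) dgmod \<Rightarrow> ('d::ab_group_add, 'b) dgmod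
      \<Rightarrow> ('a \<Rightarrow> ('c \<times> 'a) list) \<Rightarrow> ('d \<Rightarrow> ('c \<times> 'd) list) \<Rightarrow> ('a \<Rightarrow> ('c \<times> 'd) list) \<Rightarrow> bool" where
  "typeD_morphism k B B' M M' \<delta> \<delta>' \<Phi> \<longleftrightarrow>
     (let ra = (\<lambda>c i. bmul B' c (bidm B' i)); la = (\<lambda>i y. mact M' y (bidm B i)) in
     (\<forall>x y q h. mdeg M x q h \<longrightarrow> mdeg M y q h \<longrightarrow> teq k ra la (\<Phi> (x + y)) (\<Phi> x @ \<Phi> y)) \<and>
     (\<forall>x q h. \<forall>i<k. mdeg M x q h \<longrightarrow>
        teq k ra la (\<Phi> (mact M x (bidm B i))) (map (\<lambda>(b, z). (bmul B' (bidm B' i) b, z)) (\<Phi> x))) \<and>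
     (\<forall>x q h. mdeg M x q h \<longrightarrow> (\<forall>(b, z)\<in>set (\<Phi> x).
        \<exists>q1 h1 q2 h2. bdeg B' b q1 h1 \<and> mdeg M' z q2 h2 \<and> q1 + q2 = q \<and> h1 + h2 = h)) \<and>
     (\<forall>x q h. mdeg M x q h \<longrightarrow>
        teq k ra la
          (map (\<lambda>(b, z). (bdif B' b, sg (hd (mdeg M') z) z)) (\<Phi> x))
          (concat (map (\<lambda>(c, y). map (\<lambda>(b, z). (bmul B' c b, z)) (\<Phi> y)) (\<delta> x)) @
           tneg (concat (map (\<lambda>(b, z). map (\<lambda>(c, w). (bmul B' b c, w)) (\<delta>' z)) (\<Phi> x))))))"

end

theory Submission
  imports Defs "HOL-Library.Function_Algebras"
begin


lemma ind_apply: "ind p q = (if q = p then 1 else 0)" by (simp add: ind_def)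

lemma fsum_Nil[simp]: "fsum [] = 0" by (simp add: fsum_def fun_eq_iff)
lemma fsum_Cons: "fsum (x # xs) = ind x + fsum xs"
  by (auto simp: fsum_def ind_def fun_eq_iff)
lemma fsum_append: "fsum (xs @ ys) = fsum xs + fsum ys"
  by (auto simp: fsum_def fun_eq_iff)
lemma fsum_eq: "fsum xs = sum_list (map ind xs)"
  by (induction xs) (simp_all add: fsum_Cons)
lemma fsum_concat: "fsum (concat xss) = sum_list (map fsum xss)"
  by (induction xss) (simp_all add: fsum_append)
lemma fsum_map: "fsum (map f xs) = sum_list (map (\<lambda>x. ind (f x)) xs)"
  by (simp add: fsum_eq o_def)

lemma trel_zero: "0 \<in> trel k ra la"
  using trel.zero[of k ra la] by (simp add: zero_fun_def)
lemma trel_add: "f \<in> trel k ra la \<Longrightarrow> g \<in> trel k ra la \<Longrightarrow> f + g \<in> trel k ra la"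
  using trel.plus[of f k ra la g] by (simp add: plus_fun_def)
lemma trel_neg: "f \<in> trel k ra la \<Longrightarrow> - f \<in> trel k ra la"
  using trel.neg[of f k ra la] by (simp add: fun_Compl_def)
lemma trel_diff: "f \<in> trel k ra la \<Longrightarrow> g \<in> trel k ra la \<Longrightarrow> f - g \<in> trel k ra la"
  using trel_add[OF _ trel_neg, of f k ra la g] by simp
lemma trel_addl: "ind (m + m', n) - ind (m, n) - ind (m', n) \<in> trel k ra la"
  using trel.addl[of m m' n k ra la] by (simp add: fun_diff_def)
lemma trel_addr: "ind (m, n + n') - ind (m, n) - ind (m, n') \<in> trel k ra la"
  using trel.addr[of m n n' k ra la] by (simp add: fun_diff_def)
lemma trel_bal: "i < k \<Longrightarrow> ind (ra m i, n) - ind (m, la i n) \<in> trel k ra la"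
  using trel.bal[of i k ra m n la] by (simp add: fun_diff_def)
lemma trel_sum_list: "(\<And>x. x \<in> set xs \<Longrightarrow> f x \<in> trel k ra la) \<Longrightarrow> sum_list (map f xs) \<in> trel k ra la"
  by (induction xs) (auto intro: trel_zero trel_add)

lemma trel_finite: "f \<in> trel k ra la \<Longrightarrow> finite {p. f p \<noteq> 0}"
proof (induction rule: trel.induct)
  case zero then show ?case by simp
next
  case (addl m m' n)
  show ?case by (rule finite_subset[of _ "{(m+m',n),(m,n),(m',n)}"]) (auto simp: ind_def)
next
  case (addr m n n')
  show ?case by (rule finite_subset[of _ "{(m,n+n'),(m,n),(m,n')}"]) (auto simp: ind_def)
next
  case (bal i m n)
  show ?case by (rule finite_subset[of _ "{(ra m i,n),(m,la i n)}"]) (auto simp: ind_def)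
next
  case (plus f g)
  show ?case by (rule finite_subset[of _ "{p. f p \<noteq> 0} \<union> {p. g p \<noteq> 0}"]) (use plus in auto)
next
  case (neg f) then show ?case by simp
qed

definition push :: "('p \<Rightarrow> ('q \<Rightarrow> int)) \<Rightarrow> ('p \<Rightarrow> int) \<Rightarrow> ('q \<Rightarrow> int)" where
  "push G f = (\<lambda>q. \<Sum>p\<in>{p. f p \<noteq> 0}. f p * G p q)"

lemma push_superset: "finite S \<Longrightarrow> {p. f p \<noteq> 0} \<subseteq> S \<Longrightarrow> push G f = (\<lambda>q. \<Sum>p\<in>S. f p * G p q)"
  unfolding push_def by (auto intro!: ext sum.mono_neutral_left)

lemma push_add:
  assumes "finite {p. f p \<noteq> 0}" "finite {p. g p \<noteq> 0}"
  shows "push G (f + g) = push G f + push G g"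
proof -
  let ?S = "{p. f p \<noteq> 0} \<union> {p. g p \<noteq> 0}"
  have "push G (f + g) = (\<lambda>q. \<Sum>p\<in>?S. (f + g) p * G p q)"
    by (rule push_superset) (use assms in auto)
  moreover have "push G f = (\<lambda>q. \<Sum>p\<in>?S. f p * G p q)"
    by (rule push_superset) (use assms in auto)
  moreover have "push G g = (\<lambda>q. \<Sum>p\<in>?S. g p * G p q)"
    by (rule push_superset) (use assms in auto)
  ultimately show ?thesis by (simp add: fun_eq_iff sum.distrib distrib_right)
qed

lemma push_neg: "push G (- f) = - push G f"
  by (simp add: push_def fun_eq_iff sum_negf)

lemma push_diff:
  assumes "finite {p. f p \<noteq> 0}" "finite {p. g p \<noteq> 0}"
  shows "push G (f - g) = push G f - push G g"
proof -
  have "finite {p. (- g) p \<noteq> 0}" using assms by simp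
  then show ?thesis using push_add[OF assms(1), of "- g" G] push_neg[of G g] by simp
qed

lemma push_ind: "push G (ind p) = G p"
  by (simp add: push_def ind_def fun_eq_iff)

lemma finite_ind: "finite {q. ind p q \<noteq> 0}"
  by (rule finite_subset[of _ "{p}"]) (auto simp: ind_def)

lemma finite_supp_add: "finite {p. f p \<noteq> 0} \<Longrightarrow> finite {p. (g::_\<Rightarrow>int) p \<noteq> 0} \<Longrightarrow> finite {p. (f + g) p \<noteq> 0}"
  by (rule finite_subset[of _ "{p. f p \<noteq> 0} \<union> {p. g p \<noteq> 0}"]) auto
lemma finite_supp_diff: "finite {p. f p \<noteq> 0} \<Longrightarrow> finite {p. (g::_\<Rightarrow>int) p \<noteq> 0} \<Longrightarrow> finite {p. (f - g) p \<noteq> 0}"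
  by (rule finite_subset[of _ "{p. f p \<noteq> 0} \<union> {p. g p \<noteq> 0}"]) auto

lemma finite_supp_sum_list: "finite {p. (sum_list (map ind xs)) p \<noteq> 0}"
proof (induction xs)
  case Nil then show ?case by simp
next
  case (Cons x xs) then show ?case using finite_supp_add[OF finite_ind] by simp
qed

lemma push_sum_list: "push G (sum_list (map ind xs)) = sum_list (map G xs)"
proof (induction xs)
  case Nil then show ?case by (simp add: push_def fun_eq_iff)
next
  case (Cons x xs)
  have "push G (sum_list (map ind (x # xs))) = push G (ind x + sum_list (map ind xs))" by simp
  also have "\<dots> = push G (ind x) + push G (sum_list (map ind xs))"
    by (rule push_add[OF finite_ind finite_supp_sum_list])
  also have "\<dots> = G x + sum_list (map G xs)" by (simp only: push_ind Cons.IH)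
  finally show ?case by (simp only: list.map sum_list.Cons)
qed

lemma push_trel:
  assumes HL: "\<And>m m' n. G (m + m', n) - G (m, n) - G (m', n) \<in> trel k' ra' la'"
    and HR: "\<And>m n n'. G (m, n + n') - G (m, n) - G (m, n') \<in> trel k' ra' la'"
    and HB: "\<And>i m n. i < k \<Longrightarrow> G (ra m i, n) - G (m, la i n) \<in> trel k' ra' la'"
    and f: "f \<in> trel k ra la"
  shows "push G f \<in> trel k' ra' la'"
  using f
proof (induction rule: trel.induct)
  case zero then show ?case using trel_zero[of k' ra' la'] by (simp add: push_def zero_fun_def[symmetric])
next
  case (addl m m' n)
  have e: "(\<lambda>p. ind (m + m', n) p - ind (m, n) p - ind (m', n) p) = ind (m + m', n) - ind (m, n) - ind (m', n)"
    by (simp add: fun_eq_iff)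
  have "push G (ind (m + m', n) - ind (m, n) - ind (m', n)) = G (m + m', n) - G (m, n) - G (m', n)"
    by (simp only: push_diff[OF finite_supp_diff[OF finite_ind finite_ind] finite_ind]
        push_diff[OF finite_ind finite_ind] push_ind)
  then show ?case unfolding e using HL[of m m' n] by (simp only:)
next
  case (addr m n n')
  have e: "(\<lambda>p. ind (m, n + n') p - ind (m, n) p - ind (m, n') p) = ind (m, n + n') - ind (m, n) - ind (m, n')"
    by (simp add: fun_eq_iff)
  have "push G (ind (m, n + n') - ind (m, n) - ind (m, n')) = G (m, n + n') - G (m, n) - G (m, n')"
    by (simp only: push_diff[OF finite_supp_diff[OF finite_ind finite_ind] finite_ind]
        push_diff[OF finite_ind finite_ind] push_ind)
  then show ?case unfolding e using HR[of m n n'] by (simp only:)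
next
  case (bal i m n)
  have e: "(\<lambda>p. ind (ra m i, n) p - ind (m, la i n) p) = ind (ra m i, n) - ind (m, la i n)"
    by (simp add: fun_eq_iff)
  have "push G (ind (ra m i, n) - ind (m, la i n)) = G (ra m i, n) - G (m, la i n)"
    by (simp only: push_diff[OF finite_ind finite_ind] push_ind)
  then show ?case unfolding e using HB[OF bal, of m n] by (simp only:)
next
  case (plus f g)
  have e: "(\<lambda>p. f p + g p) = f + g" by (simp add: fun_eq_iff)
  show ?case unfolding e push_add[OF trel_finite[OF plus(1)] trel_finite[OF plus(2)]]
    using plus(3,4) by (rule trel_add)
next
  case (neg f)
  have e: "(\<lambda>p. - f p) = - f" by (simp add: fun_eq_iff)
  show ?case unfolding e push_neg using neg(2) by (rule trel_neg)
qed

lemma teq_push: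
  assumes "teq k ra la xs ys"
    and HL: "\<And>m m' n. G (m + m', n) - G (m, n) - G (m', n) \<in> trel k' ra' la'"
    and HR: "\<And>m n n'. G (m, n + n') - G (m, n) - G (m, n') \<in> trel k' ra' la'"
    and HB: "\<And>i m n. i < k \<Longrightarrow> G (ra m i, n) - G (m, la i n) \<in> trel k' ra' la'"
  shows "sum_list (map G xs) - sum_list (map G ys) \<in> trel k' ra' la'"
proof -
  have "(\<lambda>p. fsum xs p - fsum ys p) = sum_list (map ind xs) - sum_list (map ind ys)"
    by (simp add: fun_eq_iff fsum_eq)
  then have "sum_list (map ind xs) - sum_list (map ind ys) \<in> trel k ra la"
    using assms(1) unfolding teq_def by simp
  from push_trel[OF HL HR HB this] show ?thesis
    by (simp add: push_diff finite_supp_sum_list push_sum_list)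
qed


definition eqv :: "nat \<Rightarrow> ('m::ab_group_add \<Rightarrow> nat \<Rightarrow> 'm) \<Rightarrow> (nat \<Rightarrow> 'n::ab_group_add \<Rightarrow> 'n)
   \<Rightarrow> ('m \<times> 'n \<Rightarrow> int) \<Rightarrow> ('m \<times> 'n \<Rightarrow> int) \<Rightarrow> bool" where
  "eqv k ra la f g \<longleftrightarrow> f - g \<in> trel k ra la"

lemma teq_iff: "teq k ra la xs ys \<longleftrightarrow> eqv k ra la (fsum xs) (fsum ys)"
  unfolding teq_def eqv_def by (simp add: fun_diff_def)

lemma eqv_refl[intro]: "eqv k ra la f f" by (simp add: eqv_def trel_zero)
lemma eqv_eq: "f = g \<Longrightarrow> eqv k ra la f g" by (simp add: eqv_refl)
lemma eqv_sym: "eqv k ra la f g \<Longrightarrow> eqv k ra la g f"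
  unfolding eqv_def using trel_neg by fastforce
lemma eqv_trans[trans]: "eqv k ra la f g \<Longrightarrow> eqv k ra la g h \<Longrightarrow> eqv k ra la f h"
  unfolding eqv_def using trel_add by fastforce
lemma eqv_add: "eqv k ra la f g \<Longrightarrow> eqv k ra la f' g' \<Longrightarrow> eqv k ra la (f + f') (g + g')"
  unfolding eqv_def using trel_add by (fastforce simp: algebra_simps)
lemma eqv_neg: "eqv k ra la f g \<Longrightarrow> eqv k ra la (- f) (- g)"
  unfolding eqv_def using trel_neg by fastforce
lemma eqv_diff: "eqv k ra la f g \<Longrightarrow> eqv k ra la f' g' \<Longrightarrow> eqv k ra la (f - f') (g - g')"
  using eqv_add[OF _ eqv_neg] by (metis diff_conv_add_uminus)
lemma eqv_sg: "eqv k ra la f g \<Longrightarrow> eqv k ra la (sg e f) (sg e g)"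
  by (simp add: sg_def eqv_neg)
lemma eqv_sum_list: "(\<And>x. x \<in> set xs \<Longrightarrow> eqv k ra la (F x) (G x)) \<Longrightarrow>
    eqv k ra la (sum_list (map F xs)) (sum_list (map G xs))"
  by (induction xs) (auto intro: eqv_add)
lemma eqv_zero_iff: "eqv k ra la f 0 \<longleftrightarrow> f \<in> trel k ra la" by (simp add: eqv_def)

lemma ind_addl: "eqv k ra la (ind (m + m', n)) (ind (m, n) + ind (m', n))"
  unfolding eqv_def using trel_addl[of m m' n k ra la] by (simp add: algebra_simps)
lemma ind_addr: "eqv k ra la (ind (m, n + n')) (ind (m, n) + ind (m, n'))"
  unfolding eqv_def using trel_addr[of m n n' k ra la] by (simp add: algebra_simps)
lemma ind_bal: "i < k \<Longrightarrow> eqv k ra la (ind (ra m i, n)) (ind (m, la i n))"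
  unfolding eqv_def using trel_bal by blast
lemma ind_zero_l: "eqv k ra la (ind (0, n)) 0"
proof -
  have "ind (0 + 0, n) - (ind (0, n) + ind (0, n)) \<in> trel k ra la"
    using ind_addl[of k ra la 0 0 n] by (simp add: eqv_def)
  then have "- ind (0, n) \<in> trel k ra la" by (simp add: algebra_simps)
  from trel_neg[OF this] show ?thesis by (simp add: eqv_def)
qed
lemma ind_zero_r: "eqv k ra la (ind (m, 0)) 0"
proof -
  have "ind (m, 0 + 0) - (ind (m, 0) + ind (m, 0)) \<in> trel k ra la"
    using ind_addr[of k ra la m 0 0] by (simp add: eqv_def)
  then have "- ind (m, 0) \<in> trel k ra la" by (simp add: algebra_simps)
  from trel_neg[OF this] show ?thesis by (simp add: eqv_def)
qed
lemma ind_zero_l': "m = 0 \<Longrightarrow> eqv k ra la (ind (m, n)) 0" using ind_zero_l by blast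
lemma ind_zero_r': "n = 0 \<Longrightarrow> eqv k ra la (ind (m, n)) 0" using ind_zero_r by blast

lemma ind_neg_l: "eqv k ra la (ind (- m, n)) (- ind (m, n))"
proof -
  have "eqv k ra la (ind (m + - m, n)) (ind (m, n) + ind (- m, n))" by (rule ind_addl)
  then have "eqv k ra la 0 (ind (m, n) + ind (- m, n))"
    using eqv_trans[OF eqv_sym[OF ind_zero_l]] by simp
  then have "eqv k ra la (- ind (m, n) + 0) (- ind (m, n) + (ind (m, n) + ind (- m, n)))"
    by (rule eqv_add[OF eqv_refl])
  then have "eqv k ra la (- ind (m, n)) (ind (- m, n))" by simp
  from eqv_sym[OF this] show ?thesis .
qed
lemma ind_neg_r: "eqv k ra la (ind (m, - n)) (- ind (m, n))"
proof -
  have "eqv k ra la (ind (m, n + - n)) (ind (m, n) + ind (m, - n))" by (rule ind_addr)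
  then have "eqv k ra la 0 (ind (m, n) + ind (m, - n))"
    using eqv_trans[OF eqv_sym[OF ind_zero_r]] by simp
  then have "eqv k ra la (- ind (m, n) + 0) (- ind (m, n) + (ind (m, n) + ind (m, - n)))"
    by (rule eqv_add[OF eqv_refl])
  then have "eqv k ra la (- ind (m, n)) (ind (m, - n))" by simp
  from eqv_sym[OF this] show ?thesis .
qed
lemma ind_sg_l: "eqv k ra la (ind (sg e m, n)) (sg e (ind (m, n)))"
  unfolding sg_def using ind_neg_l[of k ra la m n] by auto
lemma ind_sg_r: "eqv k ra la (ind (m, sg e n)) (sg e (ind (m, n)))"
  unfolding sg_def using ind_neg_r[of k ra la m n] by auto
lemma ind_diffl: "eqv k ra la (ind (m - m', n)) (ind (m, n) - ind (m', n))"
proof -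
  have "eqv k ra la (ind (m + - m', n)) (ind (m, n) + ind (- m', n))" by (rule ind_addl)
  also have "eqv k ra la \<dots> (ind (m, n) + - ind (m', n))" by (rule eqv_add[OF eqv_refl ind_neg_l])
  finally show ?thesis by simp
qed
lemma ind_diffr: "eqv k ra la (ind (m, n - n')) (ind (m, n) - ind (m, n'))"
proof -
  have "eqv k ra la (ind (m, n + - n')) (ind (m, n) + ind (m, - n'))" by (rule ind_addr)
  also have "eqv k ra la \<dots> (ind (m, n) + - ind (m, n'))" by (rule eqv_add[OF eqv_refl ind_neg_r])
  finally show ?thesis by simp
qed

lemma sg_cong: "even (e - e') \<Longrightarrow> sg e x = sg e' x"
  by (auto simp: sg_def)
lemma sg_add_distrib: "sg e (x + y) = sg e x + sg e y" by (simp add: sg_def)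
lemma sg_neg: "sg e (- x) = - sg e x" by (simp add: sg_def)
lemma sg_diff: "sg e (x - y) = sg e x - sg e y" by (simp add: sg_def)
lemma sg_sg: "sg e (sg e' x) = sg (e + e') x" by (simp add: sg_def)
lemma sg_zero[simp]: "sg e 0 = 0" by (simp add: sg_def)
lemma sg_even[simp]: "even e \<Longrightarrow> sg e x = x" by (simp add: sg_def)
lemma sg_plus1: "sg (e + 1) x = - sg e x" by (simp add: sg_def)


definition homdec :: "('a::ab_group_add \<Rightarrow> int \<Rightarrow> int \<Rightarrow> bool) \<Rightarrow> 'a \<Rightarrow> (int \<times> int) set \<Rightarrow> (int \<times> int \<Rightarrow> 'a) \<Rightarrow> bool" where
  "homdec X z D f \<longleftrightarrow> finite D \<and> (\<forall>d\<in>D. X (f d) (fst d) (snd d)) \<and> z = sum f D"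

definition theta :: "('a::ab_group_add \<Rightarrow> int \<Rightarrow> int \<Rightarrow> bool) \<Rightarrow> 'a \<Rightarrow> 'a" where
  "theta X z = (SOME w. \<exists>D f. homdec X z D f \<and> w = (\<Sum>d\<in>D. sg (snd d) (f d)))"

lemma bg_zero: "bigraded_group X \<Longrightarrow> X 0 q h" by (simp add: bigraded_group_def)
lemma bg_add: "bigraded_group X \<Longrightarrow> X x q h \<Longrightarrow> X y q h \<Longrightarrow> X (x + y) q h"
  by (simp add: bigraded_group_def)
lemma bg_neg: "bigraded_group X \<Longrightarrow> X x q h \<Longrightarrow> X (- x) q h"
  by (simp add: bigraded_group_def)
lemma bg_diff: "bigraded_group X \<Longrightarrow> X x q h \<Longrightarrow> X y q h \<Longrightarrow> X (x - y) q h"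
  by (metis bg_add bg_neg diff_conv_add_uminus)
lemma bg_sg: "bigraded_group X \<Longrightarrow> X x q h \<Longrightarrow> X (sg e x) q h"
  by (simp add: sg_def bg_neg)
lemma bg_exists: "bigraded_group X \<Longrightarrow> \<exists>D f. homdec X z D f"
  unfolding bigraded_group_def homdec_def by blast
lemma bg_indep: "bigraded_group X \<Longrightarrow> finite D \<Longrightarrow> (\<forall>d\<in>D. X (f d) (fst d) (snd d)) \<Longrightarrow> sum f D = 0
        \<Longrightarrow> d \<in> D \<Longrightarrow> f d = 0"
  unfolding bigraded_group_def by blast

lemma hd_eq:
  assumes X: "bigraded_group X" and "X z q h" and "z \<noteq> 0"
  shows "hd X z = h"
proof -
  have u: "h' = h" if "X z q' h'" for q' h'
  proof (rule ccontr)
    assume ne: "h' \<noteq> h"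
    let ?D = "{(q, h), (q', h')}"
    let ?f = "\<lambda>d. if d = (q, h) then z else - z"
    have "(q, h) \<noteq> (q', h')" using ne by simp
    then have s: "sum ?f ?D = 0" by auto
    have nz: "X (- z) q' h'" by (rule bg_neg[OF X that])
    have "\<forall>d\<in>?D. X (?f d) (fst d) (snd d)"
    proof
      fix d assume "d \<in> ?D"
      then consider "d = (q, h)" | "d = (q', h')" by blast
      then show "X (?f d) (fst d) (snd d)"
      proof cases
        case 1 then show ?thesis using assms(2) by simp
      next
        case 2
        have "(q', h') \<noteq> (q, h)" using ne by simp
        then show ?thesis using 2 nz by (simp only: if_False fst_conv snd_conv)
      qed
    qed
    from bg_indep[OF X _ this s, of "(q, h)"] assms(3) show False by simp
  qed
  show ?thesis unfolding hd_def
  proof (rule the_equality)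
    show "\<exists>q'. X z q' h" using assms(2) by blast
  next
    fix h' assume "\<exists>q'. X z q' h'"
    then obtain q' where "X z q' h'" by blast
    then show "h' = h" by (rule u)
  qed
qed

lemma sum_ext0:
  assumes "finite U" "D \<subseteq> U" "\<And>d. g d 0 = 0"
  shows "(\<Sum>d\<in>U. g d (if d \<in> D then f d else 0)) = (\<Sum>d\<in>D. g d (f d))"
  by (rule sum.mono_neutral_cong_right) (use assms in auto)

lemma sum_ext0':
  assumes "finite U" "D \<subseteq> U"
  shows "(\<Sum>d\<in>U. (if d \<in> D then f d else (0::'a::comm_monoid_add))) = sum f D"
  by (rule sum.mono_neutral_cong_right) (use assms in auto)

lemma homdec_unique:
  assumes X: "bigraded_group X" and d1: "homdec X z D f" and d2: "homdec X z D' f'"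
  shows "(\<Sum>d\<in>D. sg (snd d) (f d)) = (\<Sum>d\<in>D'. sg (snd d) (f' d))"
proof -
  let ?U = "D \<union> D'"
  define F where "F d = (if d \<in> D then f d else 0)" for d
  define F' where "F' d = (if d \<in> D' then f' d else 0)" for d
  have fin: "finite ?U" using d1 d2 by (simp add: homdec_def)
  have sF: "sum F ?U = sum f D"
    unfolding F_def by (rule sum_ext0'[OF fin]) auto
  have sF': "sum F' ?U = sum f' D'"
    unfolding F'_def by (rule sum_ext0'[OF fin]) auto
  have hom: "\<forall>d\<in>?U. X (F d - F' d) (fst d) (snd d)"
    using d1 d2 unfolding homdec_def F_def F'_def
    by (auto intro!: bg_diff[OF X] bg_zero[OF X] bg_neg[OF X])
  have "sum (\<lambda>d. F d - F' d) ?U = 0"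
    using sF sF' d1 d2 by (simp add: sum_subtractf homdec_def)
  then have eq: "\<forall>d\<in>?U. F d = F' d"
    using bg_indep[OF X fin hom] by auto
  have "(\<Sum>d\<in>D. sg (snd d) (f d)) = (\<Sum>d\<in>?U. sg (snd d) (F d))"
    unfolding F_def by (rule sum_ext0[symmetric, OF fin]) auto
  also have "\<dots> = (\<Sum>d\<in>?U. sg (snd d) (F' d))" using eq by simp
  also have "\<dots> = (\<Sum>d\<in>D'. sg (snd d) (f' d))"
    unfolding F'_def by (rule sum_ext0[OF fin]) auto
  finally show ?thesis .
qed

lemma theta_eq:
  assumes X: "bigraded_group X" and d: "homdec X z D f"
  shows "theta X z = (\<Sum>d\<in>D. sg (snd d) (f d))"
proof -
  have "\<exists>w. \<exists>D f. homdec X z D f \<and> w = (\<Sum>d\<in>D. sg (snd d) (f d))" using d by blast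
  from someI_ex[OF this] obtain D' f' where "homdec X z D' f'"
    and "theta X z = (\<Sum>d\<in>D'. sg (snd d) (f' d))" unfolding theta_def by blast
  then show ?thesis using homdec_unique[OF X _ d] by simp
qed

lemma theta_hom:
  assumes X: "bigraded_group X" and "X z q h"
  shows "theta X z = sg h z"
proof -
  have "homdec X z {(q, h)} (\<lambda>_. z)" using assms by (simp add: homdec_def)
  from theta_eq[OF X this] show ?thesis by simp
qed

lemma theta_add:
  assumes X: "bigraded_group X"
  shows "theta X (z + w) = theta X z + theta X w"
proof -
  obtain D f where d1: "homdec X z D f" using bg_exists[OF X] by blast
  obtain D' f' where d2: "homdec X w D' f'" using bg_exists[OF X] by blast
  let ?U = "D \<union> D'"
  define F where "F d = (if d \<in> D then f d else 0)" for d
  define F' where "F' d = (if d \<in> D' then f' d else 0)" for d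
  have fin: "finite ?U" using d1 d2 by (simp add: homdec_def)
  have sF: "sum F ?U = sum f D"
    unfolding F_def by (rule sum_ext0'[OF fin]) auto
  have sF': "sum F' ?U = sum f' D'"
    unfolding F'_def by (rule sum_ext0'[OF fin]) auto
  have tF: "(\<Sum>d\<in>D. sg (snd d) (f d)) = (\<Sum>d\<in>?U. sg (snd d) (F d))"
    unfolding F_def by (rule sum_ext0[symmetric, OF fin]) auto
  have tF': "(\<Sum>d\<in>D'. sg (snd d) (f' d)) = (\<Sum>d\<in>?U. sg (snd d) (F' d))"
    unfolding F'_def by (rule sum_ext0[symmetric, OF fin]) auto
  have "homdec X (z + w) ?U (\<lambda>d. F d + F' d)"
    using d1 d2 fin sF sF' unfolding homdec_def F_def F'_def
    by (auto simp: sum.distrib intro!: bg_add[OF X] bg_zero[OF X])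
  from theta_eq[OF X this] have "theta X (z + w) = (\<Sum>d\<in>?U. sg (snd d) (F d + F' d))" .
  also have "\<dots> = (\<Sum>d\<in>?U. sg (snd d) (F d)) + (\<Sum>d\<in>?U. sg (snd d) (F' d))"
    by (simp add: sg_add_distrib sum.distrib)
  finally show ?thesis using theta_eq[OF X d1] theta_eq[OF X d2] tF tF' by simp
qed

lemma theta_zero: "bigraded_group X \<Longrightarrow> theta X 0 = 0"
  using theta_add[of X 0 0] by simp

lemma additive_sum:
  fixes \<phi> :: "'a::ab_group_add \<Rightarrow> 'b::ab_group_add"
  assumes "\<And>x y. \<phi> (x + y) = \<phi> x + \<phi> y"
  shows "\<phi> (sum f D) = sum (\<lambda>d. \<phi> (f d)) D"
proof -
  have z: "\<phi> 0 = 0" using assms[of 0 0] by simp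
  show ?thesis
  proof (induction D rule: infinite_finite_induct)
    case (infinite A) then show ?case by (simp add: z)
  next
    case empty then show ?case by (simp add: z)
  next
    case (insert x F) then show ?case by (simp add: assms)
  qed
qed

lemma additive_neg:
  fixes \<phi> :: "'a::ab_group_add \<Rightarrow> 'b::ab_group_add"
  assumes "\<And>x y. \<phi> (x + y) = \<phi> x + \<phi> y"
  shows "\<phi> (- x) = - \<phi> x"
proof -
  have z: "\<phi> 0 = 0" using assms[of 0 0] by simp
  have "\<phi> (x + - x) = \<phi> x + \<phi> (- x)" by (rule assms)
  then show ?thesis using z by (simp add: eq_neg_iff_add_eq_0 add.commute)
qed

lemma additive_sg:
  fixes \<phi> :: "'a::ab_group_add \<Rightarrow> 'b::ab_group_add"
  assumes "\<And>x y. \<phi> (x + y) = \<phi> x + \<phi> y"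
  shows "\<phi> (sg e x) = sg e (\<phi> x)"
  by (simp add: sg_def additive_neg[OF assms])

lemma theta_map:
  fixes \<phi> :: "'a::ab_group_add \<Rightarrow> 'b::ab_group_add"
  assumes X: "bigraded_group X" and Y: "bigraded_group Y"
    and add: "\<And>x y. \<phi> (x + y) = \<phi> x + \<phi> y"
    and deg: "\<And>x q h. X x q h \<Longrightarrow> Y (\<phi> x) q h"
  shows "theta Y (\<phi> z) = \<phi> (theta X z)"
proof -
  obtain D f where d: "homdec X z D f" using bg_exists[OF X] by blast
  have zs: "z = sum f D" using d by (simp add: homdec_def)
  have "homdec Y (\<phi> z) D (\<lambda>d. \<phi> (f d))"
    using d deg unfolding homdec_def zs additive_sum[OF add] by auto
  then have "theta Y (\<phi> z) = (\<Sum>d\<in>D. sg (snd d) (\<phi> (f d)))" by (rule theta_eq[OF Y])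
  also have "\<dots> = (\<Sum>d\<in>D. \<phi> (sg (snd d) (f d)))" by (simp only: additive_sg[OF add])
  also have "\<dots> = \<phi> (\<Sum>d\<in>D. sg (snd d) (f d))" by (rule additive_sum[OF add, symmetric])
  also have "\<dots> = \<phi> (theta X z)" using theta_eq[OF X d] by simp
  finally show ?thesis .
qed

definition sgt :: "('a::ab_group_add \<Rightarrow> int \<Rightarrow> int \<Rightarrow> bool) \<Rightarrow> int \<Rightarrow> 'a \<Rightarrow> 'a" where
  "sgt X n z = (if even n then z else theta X z)"

lemma sgt_hom:
  assumes "bigraded_group X" "X z q h" shows "sgt X n z = sg (n * h) z"
proof (cases "even n")
  case True then show ?thesis by (simp add: sgt_def)
next
  case False
  then have "sgt X n z = sg h z" by (simp add: sgt_def theta_hom[OF assms])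
  also have "\<dots> = sg (n * h) z" by (rule sg_cong) (use False in auto)
  finally show ?thesis .
qed
lemma sgt_add: "bigraded_group X \<Longrightarrow> sgt X n (z + w) = sgt X n z + sgt X n w"
  by (simp add: sgt_def theta_add)
lemma sgt_map:
  fixes \<phi> :: "'a::ab_group_add \<Rightarrow> 'a"
  shows "bigraded_group X \<Longrightarrow> (\<And>x y. \<phi> (x + y) = \<phi> x + \<phi> y) \<Longrightarrow>
   (\<And>x q h. X x q h \<Longrightarrow> X (\<phi> x) q h) \<Longrightarrow> sgt X n (\<phi> z) = \<phi> (sgt X n z)"
  unfolding sgt_def using theta_map[of X X \<phi> z] by simp


context
  fixes k :: nat and C :: "('b::ab_group_add) dgba"
  assumes alg: "dg_algebra k C"
begin
lemma alg_bg: "bigraded_group (bdeg C)" using alg[unfolded dg_algebra_def, THEN conjunct1] by blast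
lemma mul_addL: "bmul C (x + y) z = bmul C x z + bmul C y z" using alg[unfolded dg_algebra_def, THEN conjunct2, THEN conjunct1] by blast
lemma mul_addR: "bmul C x (y + z) = bmul C x y + bmul C x z" using alg[unfolded dg_algebra_def, THEN conjunct2, THEN conjunct2, THEN conjunct1] by blast
lemma mul_assoc: "bmul C (bmul C x y) z = bmul C x (bmul C y z)" using alg[unfolded dg_algebra_def, THEN conjunct2, THEN conjunct2, THEN conjunct2, THEN conjunct1] by blast
lemma mul_oneL: "bmul C (bone C) x = x" using alg[unfolded dg_algebra_def, THEN conjunct2, THEN conjunct2, THEN conjunct2, THEN conjunct2, THEN conjunct1] by blast
lemma mul_oneR: "bmul C x (bone C) = x" using alg[unfolded dg_algebra_def, THEN conjunct2, THEN conjunct2, THEN conjunct2, THEN conjunct2, THEN conjunct1] by blast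
lemma mul_deg: "bdeg C x q h \<Longrightarrow> bdeg C y q' h' \<Longrightarrow> bdeg C (bmul C x y) (q + q') (h + h')"
  using alg[unfolded dg_algebra_def, THEN conjunct2, THEN conjunct2, THEN conjunct2, THEN conjunct2, THEN conjunct2, THEN conjunct1] by blast
lemma idm_deg: "i < k \<Longrightarrow> bdeg C (bidm C i) 0 0" using alg[unfolded dg_algebra_def, THEN conjunct2, THEN conjunct2, THEN conjunct2, THEN conjunct2, THEN conjunct2, THEN conjunct2, THEN conjunct1] by blast
lemma dif_add: "bdif C (x + y) = bdif C x + bdif C y" using alg[unfolded dg_algebra_def, THEN conjunct2, THEN conjunct2, THEN conjunct2, THEN conjunct2, THEN conjunct2, THEN conjunct2, THEN conjunct2, THEN conjunct2, THEN conjunct2, THEN conjunct2, THEN conjunct2, THEN conjunct1] by blast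
lemma dif_deg: "bdeg C x q h \<Longrightarrow> bdeg C (bdif C x) q (h + 1)" using alg[unfolded dg_algebra_def, THEN conjunct2, THEN conjunct2, THEN conjunct2, THEN conjunct2, THEN conjunct2, THEN conjunct2, THEN conjunct2, THEN conjunct2, THEN conjunct2, THEN conjunct2, THEN conjunct2, THEN conjunct2, THEN conjunct1] by blast
lemma dif_mul: "bdeg C y q h \<Longrightarrow> bdif C (bmul C x y) = sg h (bmul C (bdif C x) y) + bmul C x (bdif C y)"
  using alg[unfolded dg_algebra_def, THEN conjunct2, THEN conjunct2, THEN conjunct2, THEN conjunct2, THEN conjunct2, THEN conjunct2, THEN conjunct2, THEN conjunct2, THEN conjunct2, THEN conjunct2, THEN conjunct2, THEN conjunct2, THEN conjunct2, THEN conjunct2] by blast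

lemma mul_zeroL[simp]: "bmul C 0 x = 0"
  using mul_addL[of 0 0 x] by simp
lemma mul_zeroR[simp]: "bmul C x 0 = 0"
  using mul_addR[of x 0 0] by simp
lemma mul_sgL: "bmul C (sg e x) y = sg e (bmul C x y)"
  by (rule additive_sg[where \<phi>="\<lambda>x. bmul C x y"]) (rule mul_addL)
lemma mul_sgR: "bmul C x (sg e y) = sg e (bmul C x y)"
  by (rule additive_sg[where \<phi>="\<lambda>y. bmul C x y"]) (rule mul_addR)
lemma dif_zero[simp]: "bdif C 0 = 0"
  using dif_add[of 0 0] by simp
lemma dif_sg: "bdif C (sg e x) = sg e (bdif C x)"
  by (rule additive_sg[where \<phi>="bdif C"]) (rule dif_add)

lemma one_deg: "bdeg C (bone C) 0 0"
proof -
  have b: "bone C = (\<Sum>i<k. bidm C i)" using alg[unfolded dg_algebra_def, THEN conjunct2, THEN conjunct2, THEN conjunct2, THEN conjunct2, THEN conjunct2, THEN conjunct2, THEN conjunct2, THEN conjunct2, THEN conjunct1] .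
  have iff: "\<forall>x. bdeg C x 0 0 \<longleftrightarrow> (\<exists>n. x = (\<Sum>i<k. zsc (n i) (bidm C i)))" using alg[unfolded dg_algebra_def, THEN conjunct2, THEN conjunct2, THEN conjunct2, THEN conjunct2, THEN conjunct2, THEN conjunct2, THEN conjunct2, THEN conjunct2, THEN conjunct2, THEN conjunct1] .
  have z: "zsc 1 y = y" for y :: 'b by (simp add: zsc_def)
  have "\<exists>n. bone C = (\<Sum>i<k. zsc (n i) (bidm C i))"
    by (rule exI[of _ "\<lambda>_. 1"]) (simp only: b z)
  then show ?thesis using iff by (simp only:)
qed

lemma dif_one: "bdif C (bone C) = 0"
proof -
  have "bdif C (bmul C (bone C) (bone C)) = sg 0 (bmul C (bdif C (bone C)) (bone C)) + bmul C (bone C) (bdif C (bone C))"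
    by (rule dif_mul[OF one_deg])
  then show ?thesis by (simp add: mul_oneL mul_oneR)
qed
end

context
  fixes k :: nat and C :: "('b::ab_group_add) dgba" and N :: "('a::ab_group_add, 'b) dgmod"
  assumes md: "dg_module k C N"
begin
lemma mod_bg: "bigraded_group (mdeg N)" using md[unfolded dg_module_def, THEN conjunct1] by blast
lemma act_addL: "mact N (x + y) b = mact N x b + mact N y b" using md[unfolded dg_module_def, THEN conjunct2, THEN conjunct1] by blast
lemma act_addR: "mact N x (b + c) = mact N x b + mact N x c" using md[unfolded dg_module_def, THEN conjunct2, THEN conjunct2, THEN conjunct1] by blast
lemma act_assoc: "mact N x (bmul C b c) = mact N (mact N x b) c" using md[unfolded dg_module_def, THEN conjunct2, THEN conjunct2, THEN conjunct2, THEN conjunct1] by blast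
lemma act_one: "mact N x (bone C) = x" using md[unfolded dg_module_def, THEN conjunct2, THEN conjunct2, THEN conjunct2, THEN conjunct2, THEN conjunct1] by blast
lemma act_deg: "mdeg N x q h \<Longrightarrow> bdeg C b q' h' \<Longrightarrow> mdeg N (mact N x b) (q + q') (h + h')"
  using md[unfolded dg_module_def, THEN conjunct2, THEN conjunct2, THEN conjunct2, THEN conjunct2, THEN conjunct2, THEN conjunct1] by blast
lemma mdif_add: "mdif N (x + y) = mdif N x + mdif N y" using md[unfolded dg_module_def, THEN conjunct2, THEN conjunct2, THEN conjunct2, THEN conjunct2, THEN conjunct2, THEN conjunct2, THEN conjunct1] by blast
lemma mdif_deg: "mdeg N x q h \<Longrightarrow> mdeg N (mdif N x) q (h + 1)" using md[unfolded dg_module_def, THEN conjunct2, THEN conjunct2, THEN conjunct2, THEN conjunct2, THEN conjunct2, THEN conjunct2, THEN conjunct2, THEN conjunct1] by blast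
lemma act_zeroL[simp]: "mact N 0 b = 0" using act_addL[of 0 0 b] by simp
lemma act_zeroR[simp]: "mact N x 0 = 0" using act_addR[of x 0 0] by simp
lemma mdif_zero[simp]: "mdif N 0 = 0" using mdif_add[of 0 0] by simp
lemma act_sgR: "mact N x (sg e b) = sg e (mact N x b)"
  by (rule additive_sg[where \<phi>="\<lambda>b. mact N x b"]) (rule act_addR)
lemma act_sgL: "mact N (sg e x) b = sg e (mact N x b)"
  by (rule additive_sg[where \<phi>="\<lambda>x. mact N x b"]) (rule act_addL)
lemma mdif_sg: "mdif N (sg e x) = sg e (mdif N x)"
  by (rule additive_sg[where \<phi>="mdif N"]) (rule mdif_add)
end


lemma sgfix1:
  assumes "m \<noteq> 0 \<Longrightarrow> n \<noteq> 0 \<Longrightarrow> even (e1 - e3)"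
  shows "eqv k ra la (ind (sg e1 m, n)) (sg e3 (ind (m, n)))"
proof (cases "m = 0 \<or> n = 0")
  case True
  have l: "eqv k ra la (ind (sg e1 m, n)) 0"
    using True ind_zero_l ind_zero_r by (metis sg_zero)
  have z: "eqv k ra la (ind (m, n)) 0" using True ind_zero_l ind_zero_r by metis
  have r: "eqv k ra la (sg e3 (ind (m, n))) 0" using eqv_sg[OF z, of e3] by simp
  show ?thesis using eqv_trans[OF l eqv_sym[OF r]] .
next
  case False
  then have "sg e1 (ind (m, n)) = sg e3 (ind (m, n))" using assms by (intro sg_cong) auto
  then show ?thesis using ind_sg_l[of k ra la e1 m n] by simp
qed

lemma sgfix2:
  assumes "m \<noteq> 0 \<Longrightarrow> n \<noteq> 0 \<Longrightarrow> even (e1 + e2 - e3)"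
  shows "eqv k ra la (ind (sg e1 m, sg e2 n)) (sg e3 (ind (m, n)))"
proof -
  have "eqv k ra la (ind (sg e1 m, sg e2 n)) (sg e1 (ind (m, sg e2 n)))" by (rule ind_sg_l)
  also have "eqv k ra la \<dots> (sg e1 (sg e2 (ind (m, n))))" by (rule eqv_sg[OF ind_sg_r])
  also have "\<dots> = sg (e1 + e2) (ind (m, n))" by (simp add: sg_sg)
  also have "eqv k ra la \<dots> (sg e3 (ind (m, n)))"
  proof (cases "m = 0 \<or> n = 0")
    case True
    have "eqv k ra la (ind (m, n)) 0" using True ind_zero_l ind_zero_r by metis
    then have "eqv k ra la (sg (e1 + e2) (ind (m, n))) 0" "eqv k ra la (sg e3 (ind (m, n))) 0"
      using eqv_sg by fastforce+
    then show ?thesis using eqv_trans eqv_sym by metis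
  next
    case False
    then show ?thesis using assms by (intro eqv_eq sg_cong) auto
  qed
  finally show ?thesis .
qed

locale ctx =
  fixes k :: nat and B :: "('b::ab_group_add) dgba" and B' :: "('c::ab_group_add) dgba"
    and M :: "('a::ab_group_add, 'b) dgmod" and M' :: "('d::ab_group_add, 'b) dgmod"
    and ds :: "('b \<times> 'c) list" and F1 :: "'a \<Rightarrow> 'd" and F2 :: "'a \<Rightarrow> 'b \<Rightarrow> 'd"
  assumes AB: "dg_algebra k B" and AB': "dg_algebra k B'"
    and MM: "dg_module k B M" and MM': "dg_module k B M'"
    and DD: "rank_one_DD k B B' ds" and FF: "ainf_morphism k B M M' F1 F2"
begin

abbreviation EQ (infix "\<approx>" 50) where
  "f \<approx> g \<equiv> eqv k (\<lambda>c i. bmul B' c (bidm B' i)) (\<lambda>i y. mact M' y (bidm B i)) f g"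

lemma F1_add: "F1 (x + y) = F1 x + F1 y" using FF[unfolded ainf_morphism_def, THEN conjunct1] by blast
lemma F1_deg: "mdeg M x q h \<Longrightarrow> mdeg M' (F1 x) q h" using FF[unfolded ainf_morphism_def, THEN conjunct2, THEN conjunct1] by blast
lemma F1_idm: "i < k \<Longrightarrow> F1 (mact M x (bidm B i)) = mact M' (F1 x) (bidm B i)" using FF[unfolded ainf_morphism_def, THEN conjunct2, THEN conjunct2, THEN conjunct1] by blast
lemma F2_addL: "F2 (x + y) b = F2 x b + F2 y b" using FF[unfolded ainf_morphism_def, THEN conjunct2, THEN conjunct2, THEN conjunct2, THEN conjunct1] by blast
lemma F2_addR: "F2 x (b + c) = F2 x b + F2 x c" using FF[unfolded ainf_morphism_def, THEN conjunct2, THEN conjunct2, THEN conjunct2, THEN conjunct2, THEN conjunct1] by blast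
lemma F2_idmL: "i < k \<Longrightarrow> F2 (mact M x (bidm B i)) b = F2 x (bmul B (bidm B i) b)" using FF[unfolded ainf_morphism_def, THEN conjunct2, THEN conjunct2, THEN conjunct2, THEN conjunct2, THEN conjunct2, THEN conjunct1] by blast
lemma F2_idmR: "i < k \<Longrightarrow> F2 x (bmul B b (bidm B i)) = mact M' (F2 x b) (bidm B i)" using FF[unfolded ainf_morphism_def, THEN conjunct2, THEN conjunct2, THEN conjunct2, THEN conjunct2, THEN conjunct2, THEN conjunct2, THEN conjunct1] by blast
lemma F2_deg: "mdeg M x q h \<Longrightarrow> bdeg B b q' h' \<Longrightarrow> mdeg M' (F2 x b) (q + q') (h + h' - 1)" using FF[unfolded ainf_morphism_def, THEN conjunct2, THEN conjunct2, THEN conjunct2, THEN conjunct2, THEN conjunct2, THEN conjunct2, THEN conjunct2, THEN conjunct1] by blast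
lemma F1_dif: "mdif M' (F1 x) = F1 (mdif M x)" using FF[unfolded ainf_morphism_def, THEN conjunct2, THEN conjunct2, THEN conjunct2, THEN conjunct2, THEN conjunct2, THEN conjunct2, THEN conjunct2, THEN conjunct2, THEN conjunct1] by blast
lemma A2: "bdeg B b q h \<Longrightarrow> mdif M' (F2 x b) + mact M' (F1 x) b = F1 (mact M x b) - F2 (mdif M x) (sg h b) - F2 x (bdif B b)" using FF[unfolded ainf_morphism_def, THEN conjunct2, THEN conjunct2, THEN conjunct2, THEN conjunct2, THEN conjunct2, THEN conjunct2, THEN conjunct2, THEN conjunct2, THEN conjunct2, THEN conjunct1] by blast
lemma A3: "bdeg B b' q h \<Longrightarrow> - mact M' (F2 x b) (sg h b') = F2 (mact M x b) b' - F2 x (bmul B b b')" using FF[unfolded ainf_morphism_def, THEN conjunct2, THEN conjunct2, THEN conjunct2, THEN conjunct2, THEN conjunct2, THEN conjunct2, THEN conjunct2, THEN conjunct2, THEN conjunct2, THEN conjunct2] by blast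

lemma F1_zero[simp]: "F1 0 = 0" using F1_add[of 0 0] by simp
lemma F2_zeroL[simp]: "F2 0 b = 0" using F2_addL[of 0 0 b] by simp
lemma F2_zeroR[simp]: "F2 x 0 = 0" using F2_addR[of x 0 0] by simp
lemma F2_sgR: "F2 x (sg e b) = sg e (F2 x b)"
  by (rule additive_sg[where \<phi>="\<lambda>b. F2 x b"]) (rule F2_addR)
lemma F2_negR: "F2 x (- b) = - F2 x b"
  by (rule additive_neg[where \<phi>="\<lambda>b. F2 x b"]) (rule F2_addR)

lemma DD_deg: "\<forall>(a, c)\<in>set ds. \<exists>qa ha qc hc. bdeg B a qa ha \<and> bdeg B' c qc hc \<and> qa + qc = 0 \<and> ha + hc = 1"
  using DD[unfolded rank_one_DD_def Let_def, THEN conjunct1] .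
lemma DD_I: "\<forall>i<k. teq k (\<lambda>a i. bmul B a (bidm B i)) (\<lambda>i c. bmul B' c (bidm B' i))
      (map (\<lambda>(a, c). (bmul B (bidm B i) a, c)) ds) (map (\<lambda>(a, c). (a, bmul B' (bidm B' i) c)) ds)"
  using DD[unfolded rank_one_DD_def Let_def, THEN conjunct2, THEN conjunct1] .
lemma DD_rel: "teq k (\<lambda>a i. bmul B a (bidm B i)) (\<lambda>i c. bmul B' c (bidm B' i))
       (map (\<lambda>(a, c). (sg (hd (bdeg B') c) (bdif B a), c)) ds @
        map (\<lambda>(a, c). (a, bdif B' c)) ds @
        concat (map (\<lambda>(a, c). map (\<lambda>(a', c').
            (sg (hd (bdeg B) a' * hd (bdeg B') c) (bmul B a a'), bmul B' c c')) ds) ds))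
       []"
  using DD[unfolded rank_one_DD_def Let_def, THEN conjunct2, THEN conjunct2] .

definition dgs :: "'b \<times> 'c \<Rightarrow> int \<times> int \<times> int \<times> int" where
  "dgs p = (SOME t. bdeg B (fst p) (fst t) (fst (snd t)) \<and> bdeg B' (snd p) (fst (snd (snd t))) (snd (snd (snd t)))
                  \<and> fst t + fst (snd (snd t)) = 0 \<and> fst (snd t) + snd (snd (snd t)) = 1)"
definition "QA p = fst (dgs p)"
definition "QC p = fst (snd (snd (dgs p)))"
definition "HC p = snd (snd (snd (dgs p)))"

lemma ds_deg:
  assumes "p \<in> set ds"
  shows "bdeg B (fst p) (QA p) (1 - HC p) \<and> bdeg B' (snd p) (QC p) (HC p) \<and> QA p + QC p = 0"
proof -
  obtain a c where p: "p = (a, c)" by (cases p)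
  from DD_deg assms p obtain qa ha qc hc where "bdeg B a qa ha" "bdeg B' c qc hc" "qa + qc = 0" "ha + hc = 1" by fastforce
  then have "\<exists>t. bdeg B (fst p) (fst t) (fst (snd t)) \<and> bdeg B' (snd p) (fst (snd (snd t))) (snd (snd (snd t)))
                  \<and> fst t + fst (snd (snd t)) = 0 \<and> fst (snd t) + snd (snd (snd t)) = 1"
    using p by (intro exI[of _ "(qa, ha, qc, hc)"]) simp
  from someI_ex[OF this] have "bdeg B (fst p) (QA p) (fst (snd (dgs p))) \<and> bdeg B' (snd p) (QC p) (HC p)
      \<and> QA p + QC p = 0 \<and> fst (snd (dgs p)) + HC p = 1"
    unfolding dgs_def[symmetric] QA_def QC_def HC_def .
  moreover then have "fst (snd (dgs p)) = 1 - HC p" by simp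
  ultimately show ?thesis by simp
qed

lemma degQ: "p \<in> set ds \<Longrightarrow> QA p + QC p = 0" using ds_deg by blast
lemma degA: "p \<in> set ds \<Longrightarrow> bdeg B (fst p) (QA p) (1 - HC p)" using ds_deg by blast
lemma degC: "p \<in> set ds \<Longrightarrow> bdeg B' (snd p) (QC p) (HC p)" using ds_deg by blast
lemma hdC: "p \<in> set ds \<Longrightarrow> snd p \<noteq> 0 \<Longrightarrow> hd (bdeg B') (snd p) = HC p"
  using hd_eq[OF alg_bg[OF AB'] degC] by blast
lemma hdA: "p \<in> set ds \<Longrightarrow> fst p \<noteq> 0 \<Longrightarrow> hd (bdeg B) (fst p) = 1 - HC p"
  using hd_eq[OF alg_bg[OF AB] degA] by blast
lemma hdM': "mdeg M' z q h \<Longrightarrow> z \<noteq> 0 \<Longrightarrow> hd (mdeg M') z = h"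
  using hd_eq[OF mod_bg[OF MM']] by blast
lemma hdM: "mdeg M z q h \<Longrightarrow> z \<noteq> 0 \<Longrightarrow> hd (mdeg M) z = h"
  using hd_eq[OF mod_bg[OF MM]] by blast

end

context ctx begin

lemmas zsimps[simp] = mul_zeroL[OF AB] mul_zeroR[OF AB] mul_zeroL[OF AB'] mul_zeroR[OF AB']
  dif_zero[OF AB] dif_zero[OF AB'] act_zeroL[OF MM] act_zeroR[OF MM] act_zeroL[OF MM'] act_zeroR[OF MM']
  mdif_zero[OF MM] mdif_zero[OF MM']

lemma sgfix1':
  assumes "m \<noteq> 0 \<Longrightarrow> n \<noteq> 0 \<Longrightarrow> even (e0 + e1 - e3)"
  shows "sg e0 (ind (sg e1 m, n)) \<approx> sg e3 (ind (m, n))"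
proof -
  have "sg e0 (ind (sg e1 m, n)) \<approx> sg e0 (sg (e3 - e0) (ind (m, n)))"
    by (rule eqv_sg[OF sgfix1]) (use assms in auto)
  then show ?thesis by (simp add: sg_sg)
qed

lemma Phi_expand:
  assumes y: "mdeg M y q m"
  shows "fsum (map (\<lambda>(b, z). (bmul B' b0 b, z)) (Fbox B' M' ds F1 F2 y)) \<approx>
     ind (b0, F1 y) + sum_list (map (\<lambda>p. sg (m * HC p) (ind (bmul B' b0 (snd p), F2 y (fst p)))) ds)"
proof -
  have e: "fsum (map (\<lambda>(b, z). (bmul B' b0 b, z)) (Fbox B' M' ds F1 F2 y)) =
     ind (b0, F1 y) + sum_list (map (\<lambda>p. ind (bmul B' b0 (sg (hd (bdeg B') (snd p) * (1 + hd (mdeg M') (F2 y (fst p)))) (snd p)), F2 y (fst p))) ds)"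
    by (simp add: Fbox_def fsum_Cons fsum_map mul_oneR[OF AB'] split_beta o_def)
  show ?thesis unfolding e
  proof (rule eqv_add[OF eqv_refl eqv_sum_list])
    fix p assume p: "p \<in> set ds"
    show "ind (bmul B' b0 (sg (hd (bdeg B') (snd p) * (1 + hd (mdeg M') (F2 y (fst p)))) (snd p)), F2 y (fst p))
        \<approx> sg (m * HC p) (ind (bmul B' b0 (snd p), F2 y (fst p)))"
      unfolding mul_sgR[OF AB']
    proof (rule sgfix1)
      assume nz1: "bmul B' b0 (snd p) \<noteq> 0" and nz2: "F2 y (fst p) \<noteq> 0"
      then have "snd p \<noteq> 0" by auto
      then have h1: "hd (bdeg B') (snd p) = HC p" by (rule hdC[OF p])
      have dF: "mdeg M' (F2 y (fst p)) (q + QA p) (m + (1 - HC p) - 1)" by (rule F2_deg[OF y degA[OF p]])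
      have h2: "hd (mdeg M') (F2 y (fst p)) = m - HC p" using hdM'[OF dF nz2] by simp
      show "even (hd (bdeg B') (snd p) * (1 + hd (mdeg M') (F2 y (fst p))) - m * HC p)"
        unfolding h1 h2 by auto
    qed
  qed
qed

lemma delta'_expand:
  assumes z0: "mdeg M' z0 q m"
  shows "fsum (map (\<lambda>(c, w). (bmul B' b0 c, w)) (boxD B' M' ds z0)) \<approx>
     ind (b0, mdif M' z0) + sum_list (map (\<lambda>p. sg (m * HC p) (ind (bmul B' b0 (snd p), mact M' z0 (fst p)))) ds)"
proof -
  have e: "fsum (map (\<lambda>(c, w). (bmul B' b0 c, w)) (boxD B' M' ds z0)) =
     ind (b0, mdif M' z0) + sum_list (map (\<lambda>p. ind (bmul B' b0 (sg (hd (mdeg M') (mact M' z0 (fst p)) * hd (bdeg B') (snd p)) (snd p)), mact M' z0 (fst p))) ds)"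
    by (simp add: boxD_def fsum_Cons fsum_map mul_oneR[OF AB'] split_beta o_def)
  show ?thesis unfolding e
  proof (rule eqv_add[OF eqv_refl eqv_sum_list])
    fix p assume p: "p \<in> set ds"
    show "ind (bmul B' b0 (sg (hd (mdeg M') (mact M' z0 (fst p)) * hd (bdeg B') (snd p)) (snd p)), mact M' z0 (fst p))
        \<approx> sg (m * HC p) (ind (bmul B' b0 (snd p), mact M' z0 (fst p)))"
      unfolding mul_sgR[OF AB']
    proof (rule sgfix1)
      assume nz1: "bmul B' b0 (snd p) \<noteq> 0" and nz2: "mact M' z0 (fst p) \<noteq> 0"
      then have "snd p \<noteq> 0" by auto
      then have h1: "hd (bdeg B') (snd p) = HC p" by (rule hdC[OF p])
      have dF: "mdeg M' (mact M' z0 (fst p)) (q + QA p) (m + (1 - HC p))" by (rule act_deg[OF MM' z0 degA[OF p]])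
      have h2: "hd (mdeg M') (mact M' z0 (fst p)) = m + 1 - HC p" using hdM'[OF dF nz2] by simp
      show "even (hd (mdeg M') (mact M' z0 (fst p)) * hd (bdeg B') (snd p) - m * HC p)"
        unfolding h1 h2 by auto
    qed
  qed
qed

lemma LHS_expand:
  assumes x: "mdeg M x q n"
  shows "fsum (map (\<lambda>(b, z). (bdif B' b, sg (hd (mdeg M') z) z)) (Fbox B' M' ds F1 F2 x)) \<approx>
     sum_list (map (\<lambda>p. sg (n * HC p + n + HC p) (ind (bdif B' (snd p), F2 x (fst p)))) ds)"
proof -
  have e: "fsum (map (\<lambda>(b, z). (bdif B' b, sg (hd (mdeg M') z) z)) (Fbox B' M' ds F1 F2 x)) =
     ind (0, sg (hd (mdeg M') (F1 x)) (F1 x)) + sum_list (map (\<lambda>p. ind (bdif B' (sg (hd (bdeg B') (snd p) * (1 + hd (mdeg M') (F2 x (fst p)))) (snd p)),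
          sg (hd (mdeg M') (F2 x (fst p))) (F2 x (fst p)))) ds)"
    by (simp add: Fbox_def fsum_Cons fsum_map dif_one[OF AB'] split_beta o_def)
  have "fsum (map (\<lambda>(b, z). (bdif B' b, sg (hd (mdeg M') z) z)) (Fbox B' M' ds F1 F2 x)) \<approx>
      0 + sum_list (map (\<lambda>p. sg (n * HC p + n + HC p) (ind (bdif B' (snd p), F2 x (fst p)))) ds)"
    unfolding e
  proof (rule eqv_add[OF ind_zero_l eqv_sum_list])
    fix p assume p: "p \<in> set ds"
    show "ind (bdif B' (sg (hd (bdeg B') (snd p) * (1 + hd (mdeg M') (F2 x (fst p)))) (snd p)),
          sg (hd (mdeg M') (F2 x (fst p))) (F2 x (fst p)))
        \<approx> sg (n * HC p + n + HC p) (ind (bdif B' (snd p), F2 x (fst p)))"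
      unfolding dif_sg[OF AB']
    proof (rule sgfix2)
      assume nz1: "bdif B' (snd p) \<noteq> 0" and nz2: "F2 x (fst p) \<noteq> 0"
      then have "snd p \<noteq> 0" by auto
      then have h1: "hd (bdeg B') (snd p) = HC p" by (rule hdC[OF p])
      have dF: "mdeg M' (F2 x (fst p)) (q + QA p) (n + (1 - HC p) - 1)" by (rule F2_deg[OF x degA[OF p]])
      have h2: "hd (mdeg M') (F2 x (fst p)) = n - HC p" using hdM'[OF dF nz2] by simp
      show "even (hd (bdeg B') (snd p) * (1 + hd (mdeg M') (F2 x (fst p))) + hd (mdeg M') (F2 x (fst p)) - (n * HC p + n + HC p))"
        unfolding h1 h2 by auto
    qed
  qed
  then show ?thesis by simp
qed

lemma RHS1_expand:
  assumes x: "mdeg M x q n"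
  shows "fsum (concat (map (\<lambda>(c, y). map (\<lambda>(b, z). (bmul B' c b, z)) (Fbox B' M' ds F1 F2 y)) (boxD B' M ds x))) \<approx>
     (ind (bone B', F1 (mdif M x)) + sum_list (map (\<lambda>t. sg ((n + 1) * HC t) (ind (snd t, F2 (mdif M x) (fst t)))) ds))
     + sum_list (map (\<lambda>s. sg (n * HC s) (ind (snd s, F1 (mact M x (fst s))))
          + sum_list (map (\<lambda>t. sg ((n + 1 - HC s) * (HC s + HC t)) (ind (bmul B' (snd s) (snd t), F2 (mact M x (fst s)) (fst t)))) ds)) ds)"
proof -
  let ?G = "\<lambda>c y. fsum (map (\<lambda>(b, z). (bmul B' c b, z)) (Fbox B' M' ds F1 F2 y))"
  have e: "fsum (concat (map (\<lambda>(c, y). map (\<lambda>(b, z). (bmul B' c b, z)) (Fbox B' M' ds F1 F2 y)) (boxD B' M ds x)))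
     = ?G (bone B') (mdif M x) + sum_list (map (\<lambda>s. ?G (sg (hd (mdeg M) (mact M x (fst s)) * hd (bdeg B') (snd s)) (snd s)) (mact M x (fst s))) ds)"
    by (simp add: boxD_def fsum_concat fsum_append split_beta o_def)
  show ?thesis unfolding e
  proof (rule eqv_add)
    show "?G (bone B') (mdif M x) \<approx> ind (bone B', F1 (mdif M x)) + sum_list (map (\<lambda>t. sg ((n + 1) * HC t) (ind (snd t, F2 (mdif M x) (fst t)))) ds)"
      using Phi_expand[OF mdif_deg[OF MM x], of "bone B'"] by (simp add: mul_oneL[OF AB'])
  next
    show "sum_list (map (\<lambda>s. ?G (sg (hd (mdeg M) (mact M x (fst s)) * hd (bdeg B') (snd s)) (snd s)) (mact M x (fst s))) ds) \<approx>
      sum_list (map (\<lambda>s. sg (n * HC s) (ind (snd s, F1 (mact M x (fst s))))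
          + sum_list (map (\<lambda>t. sg ((n + 1 - HC s) * (HC s + HC t)) (ind (bmul B' (snd s) (snd t), F2 (mact M x (fst s)) (fst t)))) ds)) ds)"
    proof (rule eqv_sum_list)
      fix s assume s: "s \<in> set ds"
      let ?e = "hd (mdeg M) (mact M x (fst s)) * hd (bdeg B') (snd s)"
      have xs: "mdeg M (mact M x (fst s)) (q + QA s) (n + (1 - HC s))" by (rule act_deg[OF MM x degA[OF s]])
      have "?G (sg ?e (snd s)) (mact M x (fst s)) \<approx> ind (sg ?e (snd s), F1 (mact M x (fst s)))
           + sum_list (map (\<lambda>t. sg ((n + (1 - HC s)) * HC t) (ind (bmul B' (sg ?e (snd s)) (snd t), F2 (mact M x (fst s)) (fst t)))) ds)"
        by (rule Phi_expand[OF xs])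
      also have "\<dots> \<approx> sg (n * HC s) (ind (snd s, F1 (mact M x (fst s))))
          + sum_list (map (\<lambda>t. sg ((n + 1 - HC s) * (HC s + HC t)) (ind (bmul B' (snd s) (snd t), F2 (mact M x (fst s)) (fst t)))) ds)"
      proof (rule eqv_add)
        show "ind (sg ?e (snd s), F1 (mact M x (fst s))) \<approx> sg (n * HC s) (ind (snd s, F1 (mact M x (fst s))))"
        proof (rule sgfix1)
          assume nz1: "snd s \<noteq> 0" and nz2: "F1 (mact M x (fst s)) \<noteq> 0"
          then have "mact M x (fst s) \<noteq> 0" by auto
          then have h2: "hd (mdeg M) (mact M x (fst s)) = n + 1 - HC s" using hdM[OF xs] by simp
          have h1: "hd (bdeg B') (snd s) = HC s" by (rule hdC[OF s nz1])
          show "even (?e - n * HC s)" unfolding h1 h2 by auto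
        qed
      next
        show "sum_list (map (\<lambda>t. sg ((n + (1 - HC s)) * HC t) (ind (bmul B' (sg ?e (snd s)) (snd t), F2 (mact M x (fst s)) (fst t)))) ds)
          \<approx> sum_list (map (\<lambda>t. sg ((n + 1 - HC s) * (HC s + HC t)) (ind (bmul B' (snd s) (snd t), F2 (mact M x (fst s)) (fst t)))) ds)"
        proof (rule eqv_sum_list)
          fix t assume t: "t \<in> set ds"
          show "sg ((n + (1 - HC s)) * HC t) (ind (bmul B' (sg ?e (snd s)) (snd t), F2 (mact M x (fst s)) (fst t)))
             \<approx> sg ((n + 1 - HC s) * (HC s + HC t)) (ind (bmul B' (snd s) (snd t), F2 (mact M x (fst s)) (fst t)))"
            unfolding mul_sgL[OF AB']
          proof (rule sgfix1')
            assume nz1: "bmul B' (snd s) (snd t) \<noteq> 0" and nz2: "F2 (mact M x (fst s)) (fst t) \<noteq> 0"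
            then have "mact M x (fst s) \<noteq> 0" "snd s \<noteq> 0" by auto
            then have h2: "hd (mdeg M) (mact M x (fst s)) = n + 1 - HC s" and h1: "hd (bdeg B') (snd s) = HC s"
              using hdM[OF xs] hdC[OF s] by auto
            show "even ((n + (1 - HC s)) * HC t + ?e - (n + 1 - HC s) * (HC s + HC t))"
              unfolding h1 h2 by (simp add: algebra_simps)
          qed
        qed
      qed
      finally show "?G (sg ?e (snd s)) (mact M x (fst s)) \<approx> sg (n * HC s) (ind (snd s, F1 (mact M x (fst s))))
          + sum_list (map (\<lambda>t. sg ((n + 1 - HC s) * (HC s + HC t)) (ind (bmul B' (snd s) (snd t), F2 (mact M x (fst s)) (fst t)))) ds)" .
    qed
  qed
qed

lemma RHS2_expand:
  assumes x: "mdeg M x q n"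
  shows "fsum (concat (map (\<lambda>(b, z). map (\<lambda>(c, w). (bmul B' b c, w)) (boxD B' M' ds z)) (Fbox B' M' ds F1 F2 x))) \<approx>
     (ind (bone B', mdif M' (F1 x)) + sum_list (map (\<lambda>t. sg (n * HC t) (ind (snd t, mact M' (F1 x) (fst t)))) ds))
     + sum_list (map (\<lambda>s. sg (n * HC s) (ind (snd s, mdif M' (F2 x (fst s))))
          + sum_list (map (\<lambda>t. sg (n * HC s + (n - HC s) * HC t) (ind (bmul B' (snd s) (snd t), mact M' (F2 x (fst s)) (fst t)))) ds)) ds)"
proof -
  let ?G = "\<lambda>b z. fsum (map (\<lambda>(c, w). (bmul B' b c, w)) (boxD B' M' ds z))"
  have e: "fsum (concat (map (\<lambda>(b, z). map (\<lambda>(c, w). (bmul B' b c, w)) (boxD B' M' ds z)) (Fbox B' M' ds F1 F2 x)))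
     = ?G (bone B') (F1 x) + sum_list (map (\<lambda>s. ?G (sg (hd (bdeg B') (snd s) * (1 + hd (mdeg M') (F2 x (fst s)))) (snd s)) (F2 x (fst s))) ds)"
    by (simp add: Fbox_def fsum_concat fsum_append split_beta o_def)
  show ?thesis unfolding e
  proof (rule eqv_add)
    show "?G (bone B') (F1 x) \<approx> ind (bone B', mdif M' (F1 x)) + sum_list (map (\<lambda>t. sg (n * HC t) (ind (snd t, mact M' (F1 x) (fst t)))) ds)"
      using delta'_expand[OF F1_deg[OF x], of "bone B'"] by (simp add: mul_oneL[OF AB'])
  next
    show "sum_list (map (\<lambda>s. ?G (sg (hd (bdeg B') (snd s) * (1 + hd (mdeg M') (F2 x (fst s)))) (snd s)) (F2 x (fst s))) ds) \<approx>
      sum_list (map (\<lambda>s. sg (n * HC s) (ind (snd s, mdif M' (F2 x (fst s))))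
          + sum_list (map (\<lambda>t. sg (n * HC s + (n - HC s) * HC t) (ind (bmul B' (snd s) (snd t), mact M' (F2 x (fst s)) (fst t)))) ds)) ds)"
    proof (rule eqv_sum_list)
      fix s assume s: "s \<in> set ds"
      let ?e = "hd (bdeg B') (snd s) * (1 + hd (mdeg M') (F2 x (fst s)))"
      have zs: "mdeg M' (F2 x (fst s)) (q + QA s) (n + (1 - HC s) - 1)" by (rule F2_deg[OF x degA[OF s]])
      have zs': "mdeg M' (F2 x (fst s)) (q + QA s) (n - HC s)" using zs by simp
      have "?G (sg ?e (snd s)) (F2 x (fst s)) \<approx> ind (sg ?e (snd s), mdif M' (F2 x (fst s)))
           + sum_list (map (\<lambda>t. sg ((n - HC s) * HC t) (ind (bmul B' (sg ?e (snd s)) (snd t), mact M' (F2 x (fst s)) (fst t)))) ds)"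
        by (rule delta'_expand[OF zs'])
      also have "\<dots> \<approx> sg (n * HC s) (ind (snd s, mdif M' (F2 x (fst s))))
          + sum_list (map (\<lambda>t. sg (n * HC s + (n - HC s) * HC t) (ind (bmul B' (snd s) (snd t), mact M' (F2 x (fst s)) (fst t)))) ds)"
      proof (rule eqv_add)
        show "ind (sg ?e (snd s), mdif M' (F2 x (fst s))) \<approx> sg (n * HC s) (ind (snd s, mdif M' (F2 x (fst s))))"
        proof (rule sgfix1)
          assume nz1: "snd s \<noteq> 0" and nz2: "mdif M' (F2 x (fst s)) \<noteq> 0"
          then have "F2 x (fst s) \<noteq> 0" by auto
          then have h2: "hd (mdeg M') (F2 x (fst s)) = n - HC s" using hdM'[OF zs'] by simp
          have h1: "hd (bdeg B') (snd s) = HC s" by (rule hdC[OF s nz1])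
          show "even (?e - n * HC s)" unfolding h1 h2 by auto
        qed
      next
        show "sum_list (map (\<lambda>t. sg ((n - HC s) * HC t) (ind (bmul B' (sg ?e (snd s)) (snd t), mact M' (F2 x (fst s)) (fst t)))) ds)
          \<approx> sum_list (map (\<lambda>t. sg (n * HC s + (n - HC s) * HC t) (ind (bmul B' (snd s) (snd t), mact M' (F2 x (fst s)) (fst t)))) ds)"
        proof (rule eqv_sum_list)
          fix t assume t: "t \<in> set ds"
          show "sg ((n - HC s) * HC t) (ind (bmul B' (sg ?e (snd s)) (snd t), mact M' (F2 x (fst s)) (fst t)))
             \<approx> sg (n * HC s + (n - HC s) * HC t) (ind (bmul B' (snd s) (snd t), mact M' (F2 x (fst s)) (fst t)))"
            unfolding mul_sgL[OF AB']
          proof (rule sgfix1')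
            assume nz1: "bmul B' (snd s) (snd t) \<noteq> 0" and nz2: "mact M' (F2 x (fst s)) (fst t) \<noteq> 0"
            then have "F2 x (fst s) \<noteq> 0" "snd s \<noteq> 0" by auto
            then have h2: "hd (mdeg M') (F2 x (fst s)) = n - HC s" and h1: "hd (bdeg B') (snd s) = HC s"
              using hdM'[OF zs'] hdC[OF s] by auto
            show "even ((n - HC s) * HC t + ?e - (n * HC s + (n - HC s) * HC t))"
              unfolding h1 h2 by (simp add: algebra_simps)
          qed
        qed
      qed
      finally show "?G (sg ?e (snd s)) (F2 x (fst s)) \<approx> sg (n * HC s) (ind (snd s, mdif M' (F2 x (fst s))))
          + sum_list (map (\<lambda>t. sg (n * HC s + (n - HC s) * HC t) (ind (bmul B' (snd s) (snd t), mact M' (F2 x (fst s)) (fst t)))) ds)" .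
    qed
  qed
qed

end


lemma trel_sg: "f \<in> trel k ra la \<Longrightarrow> sg e f \<in> trel k ra la"
  by (simp add: sg_def trel_neg)

lemma sum_list_concat': "sum_list (concat xss) = sum_list (map sum_list (xss :: 'a::monoid_add list list))"
  by (induction xss) auto
lemma sum_list_negf': "sum_list (map (\<lambda>x. - f x) xs) = - sum_list (map f xs :: 'a::ab_group_add list)"
  by (induction xs) auto

context ctx begin

lemma DD_final:
  assumes x: "mdeg M x q n"
  shows "sum_list (map (\<lambda>s. sg (n * HC s) (ind (snd s, F2 x (bdif B (fst s))))) ds)
       + sum_list (map (\<lambda>s. sg (n * HC s + n + HC s + 1) (ind (bdif B' (snd s), F2 x (fst s)))) ds)
       + sum_list (map (\<lambda>s. sum_list (map (\<lambda>t. sg ((n + 1 - HC s) * (HC s + HC t))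
            (ind (bmul B' (snd s) (snd t), F2 x (bmul B (fst s) (fst t))))) ds)) ds) \<approx> 0"
proof -
  define G where "G p = ind (sgt (bdeg B') (n + 1) (snd p), F2 x (fst p))" for p
  have bgB': "bigraded_group (bdeg B')" by (rule alg_bg[OF AB'])
  have push: "sum_list (map G (map (\<lambda>(a, c). (sg (hd (bdeg B') c) (bdif B a), c)) ds @
        map (\<lambda>(a, c). (a, bdif B' c)) ds @
        concat (map (\<lambda>(a, c). map (\<lambda>(a', c').
            (sg (hd (bdeg B) a' * hd (bdeg B') c) (bmul B a a'), bmul B' c c')) ds) ds)))
      - sum_list (map G []) \<in> trel k (\<lambda>c i. bmul B' c (bidm B' i)) (\<lambda>i y. mact M' y (bidm B i))"
  proof (rule teq_push[OF DD_rel])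
    fix m m' c
    show "G (m + m', c) - G (m, c) - G (m', c) \<in> trel k (\<lambda>c i. bmul B' c (bidm B' i)) (\<lambda>i y. mact M' y (bidm B i))"
      unfolding G_def by (simp add: F2_addR trel_addr)
  next
    fix m c c'
    show "G (m, c + c') - G (m, c) - G (m, c') \<in> trel k (\<lambda>c i. bmul B' c (bidm B' i)) (\<lambda>i y. mact M' y (bidm B i))"
      unfolding G_def by (simp add: sgt_add[OF bgB'] trel_addl)
  next
    fix i m c assume i: "i < k"
    have sm: "sgt (bdeg B') (n + 1) (bmul B' c (bidm B' i)) = bmul B' (sgt (bdeg B') (n + 1) c) (bidm B' i)"
    proof (rule sgt_map[OF bgB'])
      show "bmul B' (x + y) (bidm B' i) = bmul B' x (bidm B' i) + bmul B' y (bidm B' i)" for x y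
        by (rule mul_addL[OF AB'])
      show "bdeg B' (bmul B' x (bidm B' i)) q h" if "bdeg B' x q h" for x q h
        using mul_deg[OF AB' that idm_deg[OF AB' i]] by simp
    qed
    have "ind (bmul B' (sgt (bdeg B') (n + 1) c) (bidm B' i), F2 x m) - ind (sgt (bdeg B') (n + 1) c, mact M' (F2 x m) (bidm B i))
       \<in> trel k (\<lambda>c i. bmul B' c (bidm B' i)) (\<lambda>i y. mact M' y (bidm B i))"
      using trel_bal[OF i, of "\<lambda>c i. bmul B' c (bidm B' i)" "sgt (bdeg B') (n + 1) c" "F2 x m" "\<lambda>i y. mact M' y (bidm B i)"] by simp
    from trel_neg[OF this]
    show "G (bmul B m (bidm B i), c) - G (m, bmul B' c (bidm B' i)) \<in> trel k (\<lambda>c i. bmul B' c (bidm B' i)) (\<lambda>i y. mact M' y (bidm B i))"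
      unfolding G_def by (simp add: F2_idmR[OF i] sm)
  qed
  have e: "sum_list (map G (map (\<lambda>(a, c). (sg (hd (bdeg B') c) (bdif B a), c)) ds @
        map (\<lambda>(a, c). (a, bdif B' c)) ds @
        concat (map (\<lambda>(a, c). map (\<lambda>(a', c').
            (sg (hd (bdeg B) a' * hd (bdeg B') c) (bmul B a a'), bmul B' c c')) ds) ds)))
      = sum_list (map (\<lambda>s. G (sg (hd (bdeg B') (snd s)) (bdif B (fst s)), snd s)) ds)
       + sum_list (map (\<lambda>s. G (fst s, bdif B' (snd s))) ds)
       + sum_list (map (\<lambda>s. sum_list (map (\<lambda>t. G (sg (hd (bdeg B) (fst t) * hd (bdeg B') (snd s)) (bmul B (fst s) (fst t)), bmul B' (snd s) (snd t))) ds)) ds)"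
    by (simp add: map_concat sum_list_concat' split_beta o_def add.assoc)
  have z: "sum_list (map G DDL) \<approx> 0" if "sum_list (map G DDL) - sum_list (map G []) \<in> trel k (\<lambda>c i. bmul B' c (bidm B' i)) (\<lambda>i y. mact M' y (bidm B i))" for DDL
    using that by (simp add: eqv_def)
  have main: "sum_list (map (\<lambda>s. G (sg (hd (bdeg B') (snd s)) (bdif B (fst s)), snd s)) ds)
       + sum_list (map (\<lambda>s. G (fst s, bdif B' (snd s))) ds)
       + sum_list (map (\<lambda>s. sum_list (map (\<lambda>t. G (sg (hd (bdeg B) (fst t) * hd (bdeg B') (snd s)) (bmul B (fst s) (fst t)), bmul B' (snd s) (snd t))) ds)) ds)
     \<approx> 0"
    using z[OF push] unfolding e .
  have "sum_list (map (\<lambda>s. sg (n * HC s) (ind (snd s, F2 x (bdif B (fst s))))) ds)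
       + sum_list (map (\<lambda>s. sg (n * HC s + n + HC s + 1) (ind (bdif B' (snd s), F2 x (fst s)))) ds)
       + sum_list (map (\<lambda>s. sum_list (map (\<lambda>t. sg ((n + 1 - HC s) * (HC s + HC t))
            (ind (bmul B' (snd s) (snd t), F2 x (bmul B (fst s) (fst t))))) ds)) ds)
     \<approx> sum_list (map (\<lambda>s. G (sg (hd (bdeg B') (snd s)) (bdif B (fst s)), snd s)) ds)
       + sum_list (map (\<lambda>s. G (fst s, bdif B' (snd s))) ds)
       + sum_list (map (\<lambda>s. sum_list (map (\<lambda>t. G (sg (hd (bdeg B) (fst t) * hd (bdeg B') (snd s)) (bmul B (fst s) (fst t)), bmul B' (snd s) (snd t))) ds)) ds)"
  proof (intro eqv_add eqv_sum_list)
    fix s assume s: "s \<in> set ds"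
    show "sg (n * HC s) (ind (snd s, F2 x (bdif B (fst s)))) \<approx> G (sg (hd (bdeg B') (snd s)) (bdif B (fst s)), snd s)"
    proof (rule eqv_sym)
      show "G (sg (hd (bdeg B') (snd s)) (bdif B (fst s)), snd s) \<approx> sg (n * HC s) (ind (snd s, F2 x (bdif B (fst s))))"
        unfolding G_def fst_conv snd_conv sgt_hom[OF bgB' degC[OF s]] F2_sgR
      proof (rule sgfix2)
        assume "snd s \<noteq> 0"
        then have h: "hd (bdeg B') (snd s) = HC s" by (rule hdC[OF s])
        show "even ((n + 1) * HC s + hd (bdeg B') (snd s) - n * HC s)" unfolding h by (simp add: algebra_simps)
      qed
    qed
    show "sg (n * HC s + n + HC s + 1) (ind (bdif B' (snd s), F2 x (fst s))) \<approx> G (fst s, bdif B' (snd s))"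
    proof (rule eqv_sym)
      have d: "bdeg B' (bdif B' (snd s)) (QC s) (HC s + 1)" by (rule dif_deg[OF AB' degC[OF s]])
      show "G (fst s, bdif B' (snd s)) \<approx> sg (n * HC s + n + HC s + 1) (ind (bdif B' (snd s), F2 x (fst s)))"
        unfolding G_def fst_conv snd_conv sgt_hom[OF bgB' d]
        by (rule sgfix1) (simp add: algebra_simps)
    qed
    fix t assume t: "t \<in> set ds"
    show "sg ((n + 1 - HC s) * (HC s + HC t)) (ind (bmul B' (snd s) (snd t), F2 x (bmul B (fst s) (fst t))))
       \<approx> G (sg (hd (bdeg B) (fst t) * hd (bdeg B') (snd s)) (bmul B (fst s) (fst t)), bmul B' (snd s) (snd t))"
    proof (rule eqv_sym)
      have d: "bdeg B' (bmul B' (snd s) (snd t)) (QC s + QC t) (HC s + HC t)" by (rule mul_deg[OF AB' degC[OF s] degC[OF t]])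
      show "G (sg (hd (bdeg B) (fst t) * hd (bdeg B') (snd s)) (bmul B (fst s) (fst t)), bmul B' (snd s) (snd t))
         \<approx> sg ((n + 1 - HC s) * (HC s + HC t)) (ind (bmul B' (snd s) (snd t), F2 x (bmul B (fst s) (fst t))))"
        unfolding G_def fst_conv snd_conv sgt_hom[OF bgB' d] F2_sgR
      proof (rule sgfix2)
        assume nz1: "bmul B' (snd s) (snd t) \<noteq> 0" and nz2: "F2 x (bmul B (fst s) (fst t)) \<noteq> 0"
        then have "snd s \<noteq> 0" "fst t \<noteq> 0" by auto
        then have h1: "hd (bdeg B') (snd s) = HC s" and h2: "hd (bdeg B) (fst t) = 1 - HC t"
          using hdC[OF s] hdA[OF t] by auto
        show "even ((n + 1) * (HC s + HC t) + hd (bdeg B) (fst t) * hd (bdeg B') (snd s) - (n + 1 - HC s) * (HC s + HC t))"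
          unfolding h1 h2 by (simp add: algebra_simps)
      qed
    qed
  qed
  also note main
  finally show ?thesis .
qed

end


lemma eqv_by_diff: "f - g = h \<Longrightarrow> h \<in> trel k ra la \<Longrightarrow> eqv k ra la f g"
  by (simp add: eqv_def)

lemma fsum_tneg: "eqv k ra la (fsum (tneg xs)) (- fsum xs)"
proof (induction xs)
  case Nil show ?case by (rule eqv_eq) (simp add: tneg_def)
next
  case (Cons p xs)
  obtain m n where p: "p = (m, n)" by (cases p)
  have e1: "fsum (tneg (p # xs)) = ind (- m, n) + fsum (tneg xs)" by (simp add: tneg_def fsum_Cons p)
  have e2: "- fsum (p # xs) = - ind (m, n) + - fsum xs" by (simp add: fsum_Cons p)
  show ?case unfolding e1 e2 by (rule eqv_add[OF ind_neg_l Cons.IH])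
qed

context ctx begin

lemma R2rel:
  assumes s: "s \<in> set ds"
  shows "ind (snd s, mdif M' (F2 x (fst s))) + ind (snd s, mact M' (F1 x) (fst s)) \<approx>
     ind (snd s, F1 (mact M x (fst s))) - sg (1 - HC s) (ind (snd s, F2 (mdif M x) (fst s))) - ind (snd s, F2 x (bdif B (fst s)))"
proof -
  let ?c = "snd s" and ?a = "fst s"
  have a2: "mdif M' (F2 x ?a) + mact M' (F1 x) ?a = F1 (mact M x ?a) - F2 (mdif M x) (sg (1 - HC s) ?a) - F2 x (bdif B ?a)"
    by (rule A2[OF degA[OF s]])
  have "ind (?c, mdif M' (F2 x ?a)) + ind (?c, mact M' (F1 x) ?a) \<approx> ind (?c, mdif M' (F2 x ?a) + mact M' (F1 x) ?a)"
    by (rule eqv_sym[OF ind_addr])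
  also have "\<dots> = ind (?c, F1 (mact M x ?a) - sg (1 - HC s) (F2 (mdif M x) ?a) - F2 x (bdif B ?a))"
    unfolding a2 F2_sgR ..
  also have "\<dots> \<approx> ind (?c, F1 (mact M x ?a) - sg (1 - HC s) (F2 (mdif M x) ?a)) - ind (?c, F2 x (bdif B ?a))"
    by (rule ind_diffr)
  also have "\<dots> \<approx> (ind (?c, F1 (mact M x ?a)) - ind (?c, sg (1 - HC s) (F2 (mdif M x) ?a))) - ind (?c, F2 x (bdif B ?a))"
    by (rule eqv_diff[OF ind_diffr eqv_refl])
  also have "\<dots> \<approx> (ind (?c, F1 (mact M x ?a)) - sg (1 - HC s) (ind (?c, F2 (mdif M x) ?a))) - ind (?c, F2 x (bdif B ?a))"
    by (rule eqv_diff[OF eqv_diff[OF eqv_refl ind_sg_r] eqv_refl])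
  finally show ?thesis .
qed

lemma R3rel:
  assumes s: "s \<in> set ds" and t: "t \<in> set ds"
  shows "ind (c, F2 (mact M x (fst s)) (fst t)) \<approx>
     ind (c, F2 x (bmul B (fst s) (fst t))) - sg (1 - HC t) (ind (c, mact M' (F2 x (fst s)) (fst t)))"
proof -
  have a3: "- mact M' (F2 x (fst s)) (sg (1 - HC t) (fst t)) = F2 (mact M x (fst s)) (fst t) - F2 x (bmul B (fst s) (fst t))"
    by (rule A3[OF degA[OF t]])
  then have e: "F2 (mact M x (fst s)) (fst t) = F2 x (bmul B (fst s) (fst t)) + sg (1 - HC t + 1) (mact M' (F2 x (fst s)) (fst t))"
    unfolding act_sgR[OF MM'] sg_plus1 by (simp add: algebra_simps)
  have "ind (c, F2 (mact M x (fst s)) (fst t)) \<approx> ind (c, F2 x (bmul B (fst s) (fst t))) + ind (c, sg (1 - HC t + 1) (mact M' (F2 x (fst s)) (fst t)))"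
    unfolding e by (rule ind_addr)
  also have "\<dots> \<approx> ind (c, F2 x (bmul B (fst s) (fst t))) + sg (1 - HC t + 1) (ind (c, mact M' (F2 x (fst s)) (fst t)))"
    by (rule eqv_add[OF eqv_refl ind_sg_r])
  also have "\<dots> = ind (c, F2 x (bmul B (fst s) (fst t))) - sg (1 - HC t) (ind (c, mact M' (F2 x (fst s)) (fst t)))"
    unfolding sg_plus1 by simp
  finally show ?thesis .
qed

end


lemma assemble:
  fixes Xa Xb Xc Xd Aa Ab :: "'p \<Rightarrow> ('m::ab_group_add \<times> 'n::ab_group_add \<Rightarrow> int)"
    and Qa Qb Qc :: "'p \<Rightarrow> 'p \<Rightarrow> ('m \<times> 'n \<Rightarrow> int)" and h :: "'p \<Rightarrow> int" and n :: int
  assumes R2: "\<And>s. s \<in> set ds \<Longrightarrow> eqv k ra la (Xc s + Xb s) (Xa s - sg (1 - h s) (Xd s) - Aa s)"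
    and R3: "\<And>s t. s \<in> set ds \<Longrightarrow> t \<in> set ds \<Longrightarrow> eqv k ra la (Qa s t) (Qc s t - sg (1 - h t) (Qb s t))"
    and DD: "eqv k ra la (sum_list (map (\<lambda>s. sg (n * h s) (Aa s)) ds)
       + sum_list (map (\<lambda>s. sg (n * h s + n + h s + 1) (Ab s)) ds)
       + sum_list (map (\<lambda>s. sum_list (map (\<lambda>t. sg ((n + 1 - h s) * (h s + h t)) (Qc s t)) ds)) ds)) 0"
    and Y: "Y = Y'"
  shows "eqv k ra la (sum_list (map (\<lambda>s. sg (n * h s + n + h s) (Ab s)) ds))
     ((Y + sum_list (map (\<lambda>t. sg ((n + 1) * h t) (Xd t)) ds))
      + sum_list (map (\<lambda>s. sg (n * h s) (Xa s) + sum_list (map (\<lambda>t. sg ((n + 1 - h s) * (h s + h t)) (Qa s t)) ds)) ds)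
      + - ((Y' + sum_list (map (\<lambda>t. sg (n * h t) (Xb t)) ds))
      + sum_list (map (\<lambda>s. sg (n * h s) (Xc s) + sum_list (map (\<lambda>t. sg (n * h s + (n - h s) * h t) (Qb s t)) ds)) ds)))"
proof -
  define W where "W s = sg ((n + 1) * h s) (Xd s) + sg (n * h s) (Xa s) - sg (n * h s) (Xb s) - sg (n * h s) (Xc s)
     + sum_list (map (\<lambda>t. sg ((n + 1 - h s) * (h s + h t)) (Qa s t) - sg (n * h s + (n - h s) * h t) (Qb s t)) ds)" for s
  have a: "(Y + sum_list (map (\<lambda>t. sg ((n + 1) * h t) (Xd t)) ds))
      + sum_list (map (\<lambda>s. sg (n * h s) (Xa s) + sum_list (map (\<lambda>t. sg ((n + 1 - h s) * (h s + h t)) (Qa s t)) ds)) ds)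
      + - ((Y' + sum_list (map (\<lambda>t. sg (n * h t) (Xb t)) ds))
      + sum_list (map (\<lambda>s. sg (n * h s) (Xc s) + sum_list (map (\<lambda>t. sg (n * h s + (n - h s) * h t) (Qb s t)) ds)) ds))
     = sum_list (map W ds)"
    unfolding W_def Y by (simp add: sum_list_addf sum_list_subtractf algebra_simps)
  have b: "eqv k ra la (W s) (sg (n * h s) (Aa s) + sum_list (map (\<lambda>t. sg ((n + 1 - h s) * (h s + h t)) (Qc s t)) ds))"
    if s: "s \<in> set ds" for s
  proof (rule eqv_by_diff)
    have p1: "sg (n * h s) (sg (1 - h s) f) = - sg ((n + 1) * h s) f" for f :: "'m \<times> 'n \<Rightarrow> int"
    proof -
      have "sg (n * h s) (sg (1 - h s) f) = sg ((n + 1) * h s + 1) f"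
        unfolding sg_sg by (rule sg_cong) (simp add: algebra_simps)
      then show ?thesis by (simp add: sg_plus1)
    qed
    have p2: "sg ((n + 1 - h s) * (h s + h t)) (sg (1 - h t) f) = - sg (n * h s + (n - h s) * h t) f" for t and f :: "'m \<times> 'n \<Rightarrow> int"
    proof -
      have "sg ((n + 1 - h s) * (h s + h t)) (sg (1 - h t) f) = sg (n * h s + (n - h s) * h t + 1) f"
        unfolding sg_sg by (rule sg_cong) (simp add: algebra_simps)
      then show ?thesis by (simp add: sg_plus1)
    qed
    show "W s - (sg (n * h s) (Aa s) + sum_list (map (\<lambda>t. sg ((n + 1 - h s) * (h s + h t)) (Qc s t)) ds))
      = sg (n * h s) (Xa s - sg (1 - h s) (Xd s) - Aa s - (Xc s + Xb s))
        + sum_list (map (\<lambda>t. sg ((n + 1 - h s) * (h s + h t)) (Qa s t - (Qc s t - sg (1 - h t) (Qb s t)))) ds)"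
      unfolding W_def by (simp only: sg_diff sg_add_distrib p1 p2) (simp add: sum_list_addf sum_list_subtractf algebra_simps)
    show "sg (n * h s) (Xa s - sg (1 - h s) (Xd s) - Aa s - (Xc s + Xb s))
        + sum_list (map (\<lambda>t. sg ((n + 1 - h s) * (h s + h t)) (Qa s t - (Qc s t - sg (1 - h t) (Qb s t)))) ds)
       \<in> trel k ra la"
    proof (rule trel_add[OF trel_sg trel_sum_list])
      show "Xa s - sg (1 - h s) (Xd s) - Aa s - (Xc s + Xb s) \<in> trel k ra la"
        using trel_neg[OF R2[OF s, unfolded eqv_def]] by (simp add: algebra_simps)
      fix t assume t: "t \<in> set ds"
      show "sg ((n + 1 - h s) * (h s + h t)) (Qa s t - (Qc s t - sg (1 - h t) (Qb s t))) \<in> trel k ra la"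
        by (rule trel_sg) (use R3[OF s t] in \<open>simp add: eqv_def\<close>)
    qed
  qed
  have c: "eqv k ra la (sum_list (map (\<lambda>s. sg (n * h s) (Aa s) + sum_list (map (\<lambda>t. sg ((n + 1 - h s) * (h s + h t)) (Qc s t)) ds)) ds))
      (sum_list (map (\<lambda>s. sg (n * h s + n + h s) (Ab s)) ds))"
  proof (rule eqv_by_diff)
    show "sum_list (map (\<lambda>s. sg (n * h s) (Aa s) + sum_list (map (\<lambda>t. sg ((n + 1 - h s) * (h s + h t)) (Qc s t)) ds)) ds)
       - sum_list (map (\<lambda>s. sg (n * h s + n + h s) (Ab s)) ds)
      = sum_list (map (\<lambda>s. sg (n * h s) (Aa s)) ds)
       + sum_list (map (\<lambda>s. sg (n * h s + n + h s + 1) (Ab s)) ds)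
       + sum_list (map (\<lambda>s. sum_list (map (\<lambda>t. sg ((n + 1 - h s) * (h s + h t)) (Qc s t)) ds)) ds)"
      by (simp only: sg_plus1 sum_list_negf') (simp add: sum_list_addf algebra_simps)
    show "\<dots> \<in> trel k ra la" using DD by (simp add: eqv_def)
  qed
  have "eqv k ra la (sum_list (map W ds)) (sum_list (map (\<lambda>s. sg (n * h s) (Aa s) + sum_list (map (\<lambda>t. sg ((n + 1 - h s) * (h s + h t)) (Qc s t)) ds)) ds))"
    by (rule eqv_sum_list[OF b])
  from eqv_sym[OF eqv_trans[OF this c]] show ?thesis unfolding a .
qed


context ctx begin

lemma struct_eq:
  assumes x: "mdeg M x q n"
  shows "fsum (map (\<lambda>(b, z). (bdif B' b, sg (hd (mdeg M') z) z)) (Fbox B' M' ds F1 F2 x)) \<approx>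
    fsum (concat (map (\<lambda>(c, y). map (\<lambda>(b, z). (bmul B' c b, z)) (Fbox B' M' ds F1 F2 y)) (boxD B' M ds x)) @
      tneg (concat (map (\<lambda>(b, z). map (\<lambda>(c, w). (bmul B' b c, w)) (boxD B' M' ds z)) (Fbox B' M' ds F1 F2 x))))"
proof -
  have asm: "sum_list (map (\<lambda>s. sg (n * HC s + n + HC s) (ind (bdif B' (snd s), F2 x (fst s)))) ds) \<approx>
     (ind (bone B', F1 (mdif M x)) + sum_list (map (\<lambda>t. sg ((n + 1) * HC t) (ind (snd t, F2 (mdif M x) (fst t)))) ds))
     + sum_list (map (\<lambda>s. sg (n * HC s) (ind (snd s, F1 (mact M x (fst s))))
          + sum_list (map (\<lambda>t. sg ((n + 1 - HC s) * (HC s + HC t)) (ind (bmul B' (snd s) (snd t), F2 (mact M x (fst s)) (fst t)))) ds)) ds)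
     + - ((ind (bone B', mdif M' (F1 x)) + sum_list (map (\<lambda>t. sg (n * HC t) (ind (snd t, mact M' (F1 x) (fst t)))) ds))
     + sum_list (map (\<lambda>s. sg (n * HC s) (ind (snd s, mdif M' (F2 x (fst s))))
          + sum_list (map (\<lambda>t. sg (n * HC s + (n - HC s) * HC t) (ind (bmul B' (snd s) (snd t), mact M' (F2 x (fst s)) (fst t)))) ds)) ds))"
  proof (rule assemble[where Xa = "\<lambda>s. ind (snd s, F1 (mact M x (fst s)))"
        and Xb = "\<lambda>s. ind (snd s, mact M' (F1 x) (fst s))"
        and Xc = "\<lambda>s. ind (snd s, mdif M' (F2 x (fst s)))"
        and Xd = "\<lambda>s. ind (snd s, F2 (mdif M x) (fst s))"
        and Aa = "\<lambda>s. ind (snd s, F2 x (bdif B (fst s)))"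
        and Ab = "\<lambda>s. ind (bdif B' (snd s), F2 x (fst s))"
        and Qa = "\<lambda>s t. ind (bmul B' (snd s) (snd t), F2 (mact M x (fst s)) (fst t))"
        and Qb = "\<lambda>s t. ind (bmul B' (snd s) (snd t), mact M' (F2 x (fst s)) (fst t))"
        and Qc = "\<lambda>s t. ind (bmul B' (snd s) (snd t), F2 x (bmul B (fst s) (fst t)))"
        and h = HC])
    fix s assume "s \<in> set ds"
    then show "ind (snd s, mdif M' (F2 x (fst s))) + ind (snd s, mact M' (F1 x) (fst s)) \<approx>
     ind (snd s, F1 (mact M x (fst s))) - sg (1 - HC s) (ind (snd s, F2 (mdif M x) (fst s))) - ind (snd s, F2 x (bdif B (fst s)))"
      by (rule R2rel)
  next
    fix s t assume "s \<in> set ds" "t \<in> set ds"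
    then show "ind (bmul B' (snd s) (snd t), F2 (mact M x (fst s)) (fst t)) \<approx>
     ind (bmul B' (snd s) (snd t), F2 x (bmul B (fst s) (fst t))) - sg (1 - HC t) (ind (bmul B' (snd s) (snd t), mact M' (F2 x (fst s)) (fst t)))"
      by (rule R3rel)
  next
    show "sum_list (map (\<lambda>s. sg (n * HC s) (ind (snd s, F2 x (bdif B (fst s))))) ds)
       + sum_list (map (\<lambda>s. sg (n * HC s + n + HC s + 1) (ind (bdif B' (snd s), F2 x (fst s)))) ds)
       + sum_list (map (\<lambda>s. sum_list (map (\<lambda>t. sg ((n + 1 - HC s) * (HC s + HC t))
            (ind (bmul B' (snd s) (snd t), F2 x (bmul B (fst s) (fst t))))) ds)) ds) \<approx> 0"
      by (rule DD_final[OF x])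
  next
    show "ind (bone B', F1 (mdif M x)) = ind (bone B', mdif M' (F1 x))" by (simp add: F1_dif)
  qed
  have R: "fsum (concat (map (\<lambda>(c, y). map (\<lambda>(b, z). (bmul B' c b, z)) (Fbox B' M' ds F1 F2 y)) (boxD B' M ds x)) @
      tneg (concat (map (\<lambda>(b, z). map (\<lambda>(c, w). (bmul B' b c, w)) (boxD B' M' ds z)) (Fbox B' M' ds F1 F2 x)))) \<approx>
     (ind (bone B', F1 (mdif M x)) + sum_list (map (\<lambda>t. sg ((n + 1) * HC t) (ind (snd t, F2 (mdif M x) (fst t)))) ds))
     + sum_list (map (\<lambda>s. sg (n * HC s) (ind (snd s, F1 (mact M x (fst s))))
          + sum_list (map (\<lambda>t. sg ((n + 1 - HC s) * (HC s + HC t)) (ind (bmul B' (snd s) (snd t), F2 (mact M x (fst s)) (fst t)))) ds)) ds)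
     + - ((ind (bone B', mdif M' (F1 x)) + sum_list (map (\<lambda>t. sg (n * HC t) (ind (snd t, mact M' (F1 x) (fst t)))) ds))
     + sum_list (map (\<lambda>s. sg (n * HC s) (ind (snd s, mdif M' (F2 x (fst s))))
          + sum_list (map (\<lambda>t. sg (n * HC s + (n - HC s) * HC t) (ind (bmul B' (snd s) (snd t), mact M' (F2 x (fst s)) (fst t)))) ds)) ds))"
    unfolding fsum_append
    by (rule eqv_add[OF RHS1_expand[OF x] eqv_trans[OF fsum_tneg eqv_neg[OF RHS2_expand[OF x]]]])
  show ?thesis by (rule eqv_trans[OF LHS_expand[OF x] eqv_trans[OF asm eqv_sym[OF R]]])
qed

end

context ctx begin

lemma Phi_expand1:
  assumes y: "mdeg M y q m"
  shows "fsum (Fbox B' M' ds F1 F2 y) \<approx> ind (bone B', F1 y) + sum_list (map (\<lambda>p. sg (m * HC p) (ind (snd p, F2 y (fst p)))) ds)"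
proof -
  have "map (\<lambda>(b, z). (bmul B' (bone B') b, z)) L = L" for L :: "('c \<times> 'd) list"
    by (induction L) (auto simp: mul_oneL[OF AB'])
  then show ?thesis using Phi_expand[OF y, of "bone B'"] by (simp add: mul_oneL[OF AB'])
qed

lemma Phi_add:
  assumes x: "mdeg M x q n" and y: "mdeg M y q n"
  shows "fsum (Fbox B' M' ds F1 F2 (x + y)) \<approx> fsum (Fbox B' M' ds F1 F2 x @ Fbox B' M' ds F1 F2 y)"
proof -
  have xy: "mdeg M (x + y) q n" by (rule bg_add[OF mod_bg[OF MM] x y])
  have "fsum (Fbox B' M' ds F1 F2 (x + y)) \<approx> ind (bone B', F1 (x + y)) + sum_list (map (\<lambda>p. sg (n * HC p) (ind (snd p, F2 (x + y) (fst p)))) ds)"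
    by (rule Phi_expand1[OF xy])
  also have "\<dots> \<approx> (ind (bone B', F1 x) + ind (bone B', F1 y))
      + sum_list (map (\<lambda>p. sg (n * HC p) (ind (snd p, F2 x (fst p))) + sg (n * HC p) (ind (snd p, F2 y (fst p)))) ds)"
  proof (rule eqv_add)
    show "ind (bone B', F1 (x + y)) \<approx> ind (bone B', F1 x) + ind (bone B', F1 y)" unfolding F1_add by (rule ind_addr)
    show "sum_list (map (\<lambda>p. sg (n * HC p) (ind (snd p, F2 (x + y) (fst p)))) ds) \<approx>
      sum_list (map (\<lambda>p. sg (n * HC p) (ind (snd p, F2 x (fst p))) + sg (n * HC p) (ind (snd p, F2 y (fst p)))) ds)"
      unfolding sg_add_distrib[symmetric] F2_addL by (rule eqv_sum_list, rule eqv_sg, rule ind_addr)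
  qed
  also have "\<dots> = (ind (bone B', F1 x) + sum_list (map (\<lambda>p. sg (n * HC p) (ind (snd p, F2 x (fst p)))) ds))
      + (ind (bone B', F1 y) + sum_list (map (\<lambda>p. sg (n * HC p) (ind (snd p, F2 y (fst p)))) ds))"
    by (simp add: sum_list_addf algebra_simps)
  also have "\<dots> \<approx> fsum (Fbox B' M' ds F1 F2 x) + fsum (Fbox B' M' ds F1 F2 y)"
    by (rule eqv_add[OF eqv_sym[OF Phi_expand1[OF x]] eqv_sym[OF Phi_expand1[OF y]]])
  also have "\<dots> = fsum (Fbox B' M' ds F1 F2 x @ Fbox B' M' ds F1 F2 y)" by (simp add: fsum_append)
  finally show ?thesis .
qed

lemma G_push:
  assumes T: "teq k (\<lambda>a i. bmul B a (bidm B i)) (\<lambda>i c. bmul B' c (bidm B' i)) L1 L2"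
  shows "sum_list (map (\<lambda>p. ind (sgt (bdeg B') m (snd p), F2 x (fst p))) L1) \<approx>
         sum_list (map (\<lambda>p. ind (sgt (bdeg B') m (snd p), F2 x (fst p))) L2)"
proof -
  define G where "G p = ind (sgt (bdeg B') m (snd p), F2 x (fst p))" for p
  have bgB': "bigraded_group (bdeg B')" by (rule alg_bg[OF AB'])
  have "sum_list (map G L1) - sum_list (map G L2) \<in> trel k (\<lambda>c i. bmul B' c (bidm B' i)) (\<lambda>i y. mact M' y (bidm B i))"
  proof (rule teq_push[OF T])
    fix m' m'' c
    show "G (m' + m'', c) - G (m', c) - G (m'', c) \<in> trel k (\<lambda>c i. bmul B' c (bidm B' i)) (\<lambda>i y. mact M' y (bidm B i))"
      unfolding G_def by (simp add: F2_addR trel_addr)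
  next
    fix m' c c'
    show "G (m', c + c') - G (m', c) - G (m', c') \<in> trel k (\<lambda>c i. bmul B' c (bidm B' i)) (\<lambda>i y. mact M' y (bidm B i))"
      unfolding G_def by (simp add: sgt_add[OF bgB'] trel_addl)
  next
    fix i m' c assume i: "i < k"
    have sm: "sgt (bdeg B') m (bmul B' c (bidm B' i)) = bmul B' (sgt (bdeg B') m c) (bidm B' i)"
    proof (rule sgt_map[OF bgB'])
      show "bmul B' (x + y) (bidm B' i) = bmul B' x (bidm B' i) + bmul B' y (bidm B' i)" for x y
        by (rule mul_addL[OF AB'])
      show "bdeg B' (bmul B' x (bidm B' i)) q h" if "bdeg B' x q h" for x q h
        using mul_deg[OF AB' that idm_deg[OF AB' i]] by simp
    qed
    have "ind (bmul B' (sgt (bdeg B') m c) (bidm B' i), F2 x m') - ind (sgt (bdeg B') m c, mact M' (F2 x m') (bidm B i))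
       \<in> trel k (\<lambda>c i. bmul B' c (bidm B' i)) (\<lambda>i y. mact M' y (bidm B i))"
      using trel_bal[OF i, of "\<lambda>c i. bmul B' c (bidm B' i)" "sgt (bdeg B') m c" "F2 x m'" "\<lambda>i y. mact M' y (bidm B i)"] by simp
    from trel_neg[OF this]
    show "G (bmul B m' (bidm B i), c) - G (m', bmul B' c (bidm B' i)) \<in> trel k (\<lambda>c i. bmul B' c (bidm B' i)) (\<lambda>i y. mact M' y (bidm B i))"
      unfolding G_def by (simp add: F2_idmR[OF i] sm)
  qed
  then show ?thesis unfolding G_def eqv_def .
qed

lemma Phi_I:
  assumes i: "i < k" and x: "mdeg M x q n"
  shows "fsum (Fbox B' M' ds F1 F2 (mact M x (bidm B i))) \<approx> fsum (map (\<lambda>(b, z). (bmul B' (bidm B' i) b, z)) (Fbox B' M' ds F1 F2 x))"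
proof -
  have bgB': "bigraded_group (bdeg B')" by (rule alg_bg[OF AB'])
  have xi: "mdeg M (mact M x (bidm B i)) q n" using act_deg[OF MM x idm_deg[OF AB i]] by simp
  have 1: "fsum (Fbox B' M' ds F1 F2 (mact M x (bidm B i))) \<approx> ind (bone B', F1 (mact M x (bidm B i)))
      + sum_list (map (\<lambda>p. sg (n * HC p) (ind (snd p, F2 (mact M x (bidm B i)) (fst p)))) ds)"
    by (rule Phi_expand1[OF xi])
  have 2: "fsum (map (\<lambda>(b, z). (bmul B' (bidm B' i) b, z)) (Fbox B' M' ds F1 F2 x)) \<approx> ind (bidm B' i, F1 x)
      + sum_list (map (\<lambda>p. sg (n * HC p) (ind (bmul B' (bidm B' i) (snd p), F2 x (fst p)))) ds)"
    by (rule Phi_expand[OF x])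
  have 3: "ind (bone B', F1 (mact M x (bidm B i))) \<approx> ind (bidm B' i, F1 x)"
  proof -
    have "ind (bmul B' (bone B') (bidm B' i), F1 x) \<approx> ind (bone B', mact M' (F1 x) (bidm B i))"
      using ind_bal[OF i, of "\<lambda>c i. bmul B' c (bidm B' i)" "\<lambda>i y. mact M' y (bidm B i)" "bone B'" "F1 x"] by simp
    then show ?thesis unfolding F1_idm[OF i] mul_oneL[OF AB'] by (rule eqv_sym)
  qed
  have 4: "sum_list (map (\<lambda>p. sg (n * HC p) (ind (snd p, F2 (mact M x (bidm B i)) (fst p)))) ds) \<approx>
      sum_list (map (\<lambda>p. sg (n * HC p) (ind (bmul B' (bidm B' i) (snd p), F2 x (fst p)))) ds)"
  proof -
    have P: "sum_list (map (\<lambda>p. ind (sgt (bdeg B') n (snd p), F2 x (fst p))) (map (\<lambda>(a, c). (bmul B (bidm B i) a, c)) ds)) \<approx>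
         sum_list (map (\<lambda>p. ind (sgt (bdeg B') n (snd p), F2 x (fst p))) (map (\<lambda>(a, c). (a, bmul B' (bidm B' i) c)) ds))"
      by (rule G_push) (use DD_I i in blast)
    have e1: "sum_list (map (\<lambda>p. ind (sgt (bdeg B') n (snd p), F2 x (fst p))) (map (\<lambda>(a, c). (bmul B (bidm B i) a, c)) ds))
       = sum_list (map (\<lambda>p. ind (sgt (bdeg B') n (snd p), F2 x (bmul B (bidm B i) (fst p)))) ds)"
      by (simp add: split_beta o_def)
    have e2: "sum_list (map (\<lambda>p. ind (sgt (bdeg B') n (snd p), F2 x (fst p))) (map (\<lambda>(a, c). (a, bmul B' (bidm B' i) c)) ds))
       = sum_list (map (\<lambda>p. ind (sgt (bdeg B') n (bmul B' (bidm B' i) (snd p)), F2 x (fst p))) ds)"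
      by (simp add: split_beta o_def)
    have "sum_list (map (\<lambda>p. sg (n * HC p) (ind (snd p, F2 (mact M x (bidm B i)) (fst p)))) ds)
        \<approx> sum_list (map (\<lambda>p. ind (sgt (bdeg B') n (snd p), F2 x (bmul B (bidm B i) (fst p)))) ds)"
    proof (rule eqv_sum_list)
      fix p assume p: "p \<in> set ds"
      show "sg (n * HC p) (ind (snd p, F2 (mact M x (bidm B i)) (fst p))) \<approx> ind (sgt (bdeg B') n (snd p), F2 x (bmul B (bidm B i) (fst p)))"
        unfolding F2_idmL[OF i] sgt_hom[OF bgB' degC[OF p]] by (rule eqv_sym[OF ind_sg_l])
    qed
    also have "\<dots> \<approx> sum_list (map (\<lambda>p. ind (sgt (bdeg B') n (bmul B' (bidm B' i) (snd p)), F2 x (fst p))) ds)"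
      using P unfolding e1 e2 .
    also have "\<dots> \<approx> sum_list (map (\<lambda>p. sg (n * HC p) (ind (bmul B' (bidm B' i) (snd p), F2 x (fst p)))) ds)"
    proof (rule eqv_sum_list)
      fix p assume p: "p \<in> set ds"
      have d: "bdeg B' (bmul B' (bidm B' i) (snd p)) (QC p) (HC p)"
        using mul_deg[OF AB' idm_deg[OF AB' i] degC[OF p]] by simp
      show "ind (sgt (bdeg B') n (bmul B' (bidm B' i) (snd p)), F2 x (fst p)) \<approx> sg (n * HC p) (ind (bmul B' (bidm B' i) (snd p), F2 x (fst p)))"
        unfolding sgt_hom[OF bgB' d] by (rule ind_sg_l)
    qed
    finally show ?thesis .
  qed
  show ?thesis by (rule eqv_trans[OF 1 eqv_trans[OF eqv_add[OF 3 4] eqv_sym[OF 2]]])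
qed

lemma Phi_grading:
  assumes x: "mdeg M x q h"
  shows "\<forall>(b, z)\<in>set (Fbox B' M' ds F1 F2 x).
        \<exists>q1 h1 q2 h2. bdeg B' b q1 h1 \<and> mdeg M' z q2 h2 \<and> q1 + q2 = q \<and> h1 + h2 = h"
proof
  fix bz assume "bz \<in> set (Fbox B' M' ds F1 F2 x)"
  then consider "bz = (bone B', F1 x)"
    | p where "p \<in> set ds" "bz = (sg (hd (bdeg B') (snd p) * (1 + hd (mdeg M') (F2 x (fst p)))) (snd p), F2 x (fst p))"
    unfolding Fbox_def by (auto simp: split_beta)
  then show "case bz of (b, z) \<Rightarrow> \<exists>q1 h1 q2 h2. bdeg B' b q1 h1 \<and> mdeg M' z q2 h2 \<and> q1 + q2 = q \<and> h1 + h2 = h"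
  proof cases
    case 1
    then show ?thesis using one_deg[OF AB'] F1_deg[OF x] by fastforce
  next
    case (2 p)
    have c: "bdeg B' (sg (hd (bdeg B') (snd p) * (1 + hd (mdeg M') (F2 x (fst p)))) (snd p)) (QC p) (HC p)"
      by (rule bg_sg[OF alg_bg[OF AB'] degC[OF 2(1)]])
    have z: "mdeg M' (F2 x (fst p)) (q + QA p) (h + (1 - HC p) - 1)" by (rule F2_deg[OF x degA[OF 2(1)]])
    have "QC p + (q + QA p) = q" "HC p + (h + (1 - HC p) - 1) = h" using degQ[OF 2(1)] by simp_all
    then show ?thesis using c z 2(2) by fastforce
  qed
qed

end

theorem proposition6p50:
  fixes k :: nat
    and B :: "('b::ab_group_add) dgba" and B' :: "('c::ab_group_add) dgba"
    and M :: "('a::ab_group_add, 'b) dgmod" and M' :: "('d::ab_group_add, 'b) dgmod"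
    and ds :: "('b \<times> 'c) list"
    and F1 :: "'a \<Rightarrow> 'd" and F2 :: "'a \<Rightarrow> 'b \<Rightarrow> 'd"
  assumes "dg_algebra k B" and "dg_algebra k B'"
    and "dg_module k B M" and "dg_module k B M'"
    and "free_homog_basis k B M" and "free_homog_basis k B M'"
    and "rank_one_DD k B B' ds"
    and "ainf_morphism k B M M' F1 F2"
  shows "typeD_morphism k B B' M M' (boxD B' M ds) (boxD B' M' ds) (Fbox B' M' ds F1 F2)"
proof -
  interpret ctx k B B' M M' ds F1 F2
    by (rule ctx.intro) (fact assms)+
  show ?thesis
    unfolding typeD_morphism_def Let_def teq_iff
  proof (intro conjI allI impI)
    fix x y q h assume "mdeg M x q h" "mdeg M y q h"
    then show "fsum (Fbox B' M' ds F1 F2 (x + y)) \<approx> fsum (Fbox B' M' ds F1 F2 x @ Fbox B' M' ds F1 F2 y)"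
      by (rule Phi_add)
  next
    fix x q h i assume "i < k" "mdeg M x q h"
    then show "fsum (Fbox B' M' ds F1 F2 (mact M x (bidm B i))) \<approx> fsum (map (\<lambda>(b, z). (bmul B' (bidm B' i) b, z)) (Fbox B' M' ds F1 F2 x))"
      by (rule Phi_I)
  next
    fix x q h assume "mdeg M x q h"
    then show "\<forall>(b, z)\<in>set (Fbox B' M' ds F1 F2 x).
        \<exists>q1 h1 q2 h2. bdeg B' b q1 h1 \<and> mdeg M' z q2 h2 \<and> q1 + q2 = q \<and> h1 + h2 = h"
      by (rule Phi_grading)
  next
    fix x q h assume "mdeg M x q h"
    then show "fsum (map (\<lambda>(b, z). (bdif B' b, sg (hd (mdeg M') z) z)) (Fbox B' M' ds F1 F2 x)) \<approx>
    fsum (concat (map (\<lambda>(c, y). map (\<lambda>(b, z). (bmul B' c b, z)) (Fbox B' M' ds F1 F2 y)) (boxD B' M ds x)) @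
      tneg (concat (map (\<lambda>(b, z). map (\<lambda>(c, w). (bmul B' b c, w)) (boxD B' M' ds z)) (Fbox B' M' ds F1 F2 x))))"
      by (rule struct_eq)
  qed
qed


end
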